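(* Let $K$ be a number field and $f$ a monic family of polynomials, homogeneous of degree $d$ and weight $e$. Then, with all constants independent of $t$ (depending only on $K$ and $f$): (1) There exist $M_K$-constants $\mathfrak{a},\mathfrak{b}$ such that for all $v\in M_K$ and all $t,z\in K$ with $\log|z|_v>\frac{1}{e}\log^+|t|_v+\mathfrak{a}_v$, we have $|f_t(z)|_v\geq|z|_v$ and $\left|G_{f_t, v}(z)-\log|z|_v\right|\leq \mathfrak{b}_v$. Moreover $\mathfrak{b}_v=0$ unless $v$ is archimedean. (2) There exists a finite set $S\subseteq M_K$ such that for every non-archimedean $v\notin S$ and every $t\in K^*$ with $e\nmid v(t)$, we have $G_{f_t, v}(z)\geq \frac{1}{d}\log^+|t|_v$ for all $z\in K$. (3) There exists a finite set $S\subseteq M_K$ such that for any $t\in K$ and any $v\notin S$ with $|t|_v>1$, every preperiodic point $z\in K$ of $f_t$ satisfies $|z|^e_v=|t|_v$.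
   Context: $M_K$ is the set of places of $K$; each $|\cdot|_v$ extends a standard absolute value of $\mathbb{Q}$ and is fixed on $\overline K$; non-archimedean valuations are normalized so that $v(K^* )=\mathbb{Z}$. An $M_K$-constant is a function $v\mapsto\mathfrak{a}_v\in\mathbb{R}$ on $M_K$ vanishing for all but finitely many $v$. $\log^+X=\log\max\{1,X\}$. A monic family homogeneous of degree $d$ and weight $e$ ($e\ge2$) is one with $f_t(z)=\prod_{i=1}^{d/e}(z^e-\beta_i t)$ for fixed nonzero $\beta_i\in K$. For a polynomial $g$ of degree $d\ge2$, $G_{g,v}(P)=\lim_{n\to\infty}d^{-n}\log^+|g^n(P)|_v$. A point is preperiodic if its forward orbit is finite. *)

theory Defs
  imports "HOL-Analysis.Analysis" "HOL-Computational_Algebra.Primes"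
begin

definition number_field :: "'k::field_char_0 itself \<Rightarrow> bool" where
  "number_field _ \<longleftrightarrow> (\<exists>B::'k set. finite B \<and>
      (\<forall>x::'k. \<exists>c::'k \<Rightarrow> rat. x = (\<Sum>b\<in>B. of_rat (c b) * b)))"

definition abs_value :: "('k::field \<Rightarrow> real) \<Rightarrow> bool" where
  "abs_value a \<longleftrightarrow> (\<forall>x. a x \<ge> 0) \<and> (\<forall>x. a x = 0 \<longleftrightarrow> x = 0) \<and>
     (\<forall>x y. a (x * y) = a x * a y) \<and> (\<forall>x y. a (x + y) \<le> a x + a y)"

definition extends_arch :: "('k::field_char_0 \<Rightarrow> real) \<Rightarrow> bool" where
  "extends_arch a \<longleftrightarrow> (\<forall>n::int. a (of_int n) = \<bar>real_of_int n\<bar>)"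

definition extends_padic :: "nat \<Rightarrow> ('k::field_char_0 \<Rightarrow> real) \<Rightarrow> bool" where
  "extends_padic p a \<longleftrightarrow> (\<forall>n::int. n \<noteq> 0 \<longrightarrow>
      a (of_int n) = real p powr (- real (multiplicity (int p) n)))"

text \<open>The places M_K of K, each represented by its absolute value extending a standard
  absolute value of the rationals.\<close>
definition places :: "('k::field_char_0 \<Rightarrow> real) set" where
  "places = {a. abs_value a \<and> (extends_arch a \<or> (\<exists>p. prime p \<and> extends_padic p a))}"

definition archimedean :: "('k::field_char_0 \<Rightarrow> real) \<Rightarrow> bool" where
  "archimedean a \<longleftrightarrow> extends_arch a"

text \<open>Normalized valuation v with v(K^*) = Z at a non-archimedean place.\<close>
definition uniformizer :: "('k::field \<Rightarrow> real) \<Rightarrow> 'k \<Rightarrow> bool" where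
  "uniformizer a \<pi> \<longleftrightarrow> \<pi> \<noteq> 0 \<and> a \<pi> < 1 \<and>
     (\<forall>x. x \<noteq> 0 \<longrightarrow> (\<exists>k::int. a x = a \<pi> powi k))"

definition nval :: "('k::field \<Rightarrow> real) \<Rightarrow> 'k \<Rightarrow> int" where
  "nval a x = (THE k::int. a x = a (SOME \<pi>. uniformizer a \<pi>) powi k)"

definition MK_constant :: "(('k::field_char_0 \<Rightarrow> real) \<Rightarrow> real) \<Rightarrow> bool" where
  "MK_constant c \<longleftrightarrow> finite {v \<in> places. c v \<noteq> 0}"

definition logp :: "real \<Rightarrow> real" where
  "logp x = ln (max 1 x)"

text \<open>Monic family homogeneous of degree d = e * length beta and weight e:
  f_t(z) = prod_i (z^e - beta_i t).\<close>
definition famf :: "nat \<Rightarrow> 'k::field list \<Rightarrow> 'k \<Rightarrow> 'k \<Rightarrow> 'k" where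
  "famf e \<beta> t z = (\<Prod>b\<leftarrow>\<beta>. z ^ e - b * t)"

definition green :: "nat \<Rightarrow> ('k \<Rightarrow> 'k) \<Rightarrow> ('k \<Rightarrow> real) \<Rightarrow> 'k \<Rightarrow> real" where
  "green d g a P = lim (\<lambda>n. logp (a ((g ^^ n) P)) / real d ^ n)"

definition preperiodic :: "('k \<Rightarrow> 'k) \<Rightarrow> 'k \<Rightarrow> bool" where
  "preperiodic g z \<longleftrightarrow> finite {(g ^^ n) z | n. True}"

end

theory Submission
  imports Defs "HOL-Real_Asymp.Real_Asymp"
begin

section \<open>Basic facts on absolute values\<close>

context
  fixes v :: "'k::field \<Rightarrow> real"
  assumes av: "abs_value v"
begin

lemma av_nonneg: "v x \<ge> 0" using av unfolding abs_value_def by blast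
lemma av_eq0: "v x = 0 \<longleftrightarrow> x = 0" using av unfolding abs_value_def by blast
lemma av_mult: "v (x * y) = v x * v y" using av unfolding abs_value_def by blast
lemma av_tri: "v (x + y) \<le> v x + v y" using av unfolding abs_value_def by blast
lemma av_zero[simp]: "v 0 = 0" using av_eq0 by simp
lemma av_pos: "x \<noteq> 0 \<Longrightarrow> v x > 0" using av_nonneg av_eq0 by (metis less_eq_real_def)

lemma av_one: "v 1 = 1"
proof -
  have "v 1 = v 1 * v 1" using av_mult[of 1 1] by simp
  moreover have "v 1 \<noteq> 0" using av_eq0 by simp
  ultimately show ?thesis by simp
qed

lemma av_power: "v (x ^ n) = v x ^ n"
  by (induction n) (auto simp: av_one av_mult)

lemma av_inverse: "v (inverse x) = inverse (v x)"
proof (cases "x = 0")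
  case True then show ?thesis using av_eq0 by simp
next
  case False
  have "v (inverse x) * v x = 1" using av_mult[of "inverse x" x] False av_one by simp
  moreover have "v x \<noteq> 0" using False av_eq0 by simp
  ultimately show ?thesis by (simp add: field_simps)
qed

lemma av_divide: "v (x / y) = v x / v y"
  by (simp add: divide_inverse av_mult av_inverse)

lemma av_minus: "v (- x) = v x"
proof -
  have "v (-1) * v (-1) = 1" using av_mult[of "-1" "-1"] av_one by simp
  then have "v (-1) ^ 2 = 1" by (simp add: power2_eq_square)
  then have "v (-1) = 1 \<or> v (-1) = -1" by (simp add: power2_eq_1_iff)
  moreover have "v (-1) \<ge> 0" by (rule av_nonneg)
  ultimately have "v (-1) = 1" by linarith
  then show ?thesis using av_mult[of "-1" x] by simp
qed

lemma av_diff_tri: "v (x - y) \<le> v x + v y"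
  using av_tri[of x "-y"] av_minus[of y] by simp

lemma av_rev_tri: "v x - v y \<le> v (x + y)"
proof -
  have "v x = v ((x + y) + (- y))" by simp
  also have "\<dots> \<le> v (x + y) + v (- y)" by (rule av_tri)
  also have "v (- y) = v y" by (rule av_minus)
  finally show ?thesis by simp
qed

lemma av_rev_tri_diff: "v x - v y \<le> v (x - y)"
  using av_rev_tri[of x "-y"] av_minus[of y] by simp

lemma av_sum_le: "v (sum f S) \<le> (\<Sum>i\<in>S. v (f i))"
proof (induction S rule: infinite_finite_induct)
  case (infinite A) then show ?case using av_eq0 by simp
next
  case empty then show ?case using av_eq0 by simp
next
  case (insert x F)
  then show ?case using av_tri[of "f x" "sum f F"] by simp
qed

lemma av_prod_list: "v (prod_list xs) = prod_list (map v xs)"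
  by (induction xs) (auto simp: av_one av_mult)

lemma av_power_int: "v (x powi n) = v x powi n"
  by (simp add: power_int_def av_power av_inverse)

end

section \<open>Ultrametric\<close>

definition ultra :: "('k::field \<Rightarrow> real) \<Rightarrow> bool" where
  "ultra v \<longleftrightarrow> (\<forall>x y. v (x + y) \<le> max (v x) (v y))"

lemma pow_beats_linear:
  fixes c :: real assumes "c > 1" shows "\<exists>k::nat. c ^ k > real k + 1"
proof -
  have "filterlim (\<lambda>k::nat. c^k / (real k + 1)) at_top sequentially"
    using assms by real_asymp
  then have "\<forall>Z. eventually (\<lambda>k. Z < c^k / (real k + 1)) sequentially"
    by (rule filterlim_at_top_dense[THEN iffD1])
  then have "eventually (\<lambda>k. 1 < c^k / (real k + 1)) sequentially" by blast
  then obtain N where "\<forall>k\<ge>N. 1 < c^k / (real k + 1)" unfolding eventually_sequentially by blast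
  then have "c^N / (real N + 1) > 1" by blast
  then obtain k where "c^k / (real k + 1) > 1" by blast
  then show ?thesis by (intro exI[of _ k]) (simp add: field_simps)
qed

lemma ultra_of_int:
  fixes v :: "'k::field \<Rightarrow> real"
  assumes av: "abs_value v" and le1: "\<And>n::int. v (of_int n) \<le> 1"
  shows "ultra v"
  unfolding ultra_def
proof (intro allI)
  fix x y :: 'k
  define M where "M = max (v x) (v y)"
  have M0: "M \<ge> 0" using av_nonneg[OF av] M_def by (simp add: le_max_iff_disj)
  have bound: "v (x + y) ^ k \<le> (real k + 1) * M ^ k" for k
  proof -
    have "v (x + y) ^ k = v ((x + y) ^ k)" by (simp add: av_power[OF av])
    also have "\<dots> = v (\<Sum>i\<le>k. of_nat (k choose i) * x ^ i * y ^ (k - i))"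
      by (simp add: binomial_ring)
    also have "\<dots> \<le> (\<Sum>i\<le>k. v (of_nat (k choose i) * x ^ i * y ^ (k - i)))"
      by (rule av_sum_le[OF av])
    also have "\<dots> \<le> (\<Sum>i\<le>k. M ^ k)"
    proof (rule sum_mono)
      fix i assume i: "i \<in> {..k}"
      have c1: "v (of_nat (k choose i)) \<le> 1" using le1[of "int (k choose i)"] by simp
      have "v (of_nat (k choose i) * x ^ i * y ^ (k - i)) = v (of_nat (k choose i)) * (v x ^ i * v y ^ (k - i))"
        by (simp add: av_mult[OF av] av_power[OF av])
      also have "\<dots> \<le> 1 * (M ^ i * M ^ (k - i))"
      proof (rule mult_mono[OF c1])
        have "v x \<le> M" "v y \<le> M" using M_def by auto
        then show "v x ^ i * v y ^ (k - i) \<le> M ^ i * M ^ (k - i)"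
          using av_nonneg[OF av] M0 by (intro mult_mono power_mono) auto
        show "(0::real) \<le> 1" by simp
        show "0 \<le> v x ^ i * v y ^ (k - i)" using av_nonneg[OF av] by simp
      qed
      also have "\<dots> = M ^ k" using i by (simp add: power_add[symmetric])
      finally show "v (of_nat (k choose i) * x ^ i * y ^ (k - i)) \<le> M ^ k" .
    qed
    also have "\<dots> = (real k + 1) * M ^ k" by simp
    finally show ?thesis .
  qed
  show "v (x + y) \<le> max (v x) (v y)"
  proof (rule ccontr)
    assume "\<not> ?thesis"
    then have gt: "v (x + y) > M" unfolding M_def by (simp add: not_le max_def split: if_splits)
    show False
    proof (cases "M = 0")
      case True
      have "v x \<le> M" "v y \<le> M" by (auto simp: M_def)
      then have "v x = 0" "v y = 0" using True av_nonneg[OF av, of x] av_nonneg[OF av, of y] by linarith+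
      then have "x = 0" "y = 0" using av_eq0[OF av] by auto
      then show False using gt True av_zero[OF av] by simp
    next
      case False
      then have Mp: "M > 0" using M0 by simp
      have "v (x + y) / M > 1" using gt Mp by simp
      then obtain k where k: "(v (x + y) / M) ^ k > real k + 1" using pow_beats_linear by blast
      then have "v (x + y) ^ k > (real k + 1) * M ^ k" using Mp by (simp add: power_divide field_simps)
      then show False using bound[of k] by simp
    qed
  qed
qed

context
  fixes v :: "'k::field \<Rightarrow> real"
  assumes av: "abs_value v" and um: "ultra v"
begin

lemma um_zero[simp]: "v 0 = 0" using av_zero[OF av] .

lemma um_add: "v (x + y) \<le> max (v x) (v y)" using um unfolding ultra_def by blast

lemma um_strict: assumes "v y < v x" shows "v (x + y) = v x"
proof -
  have "v (x + y) \<le> v x" using um_add[of x y] assms by simp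
  moreover have "v x \<le> max (v (x + y)) (v y)" using um_add[of "x + y" "-y"] av_minus[OF av] by simp
  ultimately show ?thesis using assms by (simp add: max_def split: if_splits)
qed

lemma um_strict_diff: assumes "v y < v x" shows "v (x - y) = v x"
  using um_strict[of "-y" x] assms av_minus[OF av] by simp

lemma um_strict_diff2: assumes "v x < v y" shows "v (x - y) = v y"
proof -
  have "v (x - y) = v (- (x - y))" using av_minus[OF av] by metis
  also have "\<dots> = v (y - x)" by simp
  also have "\<dots> = v y" using um_strict_diff assms by simp
  finally show ?thesis .
qed

lemma um_diff_le: "v (x - y) \<le> max (v x) (v y)"
  using um_add[of x "-y"] av_minus[OF av] by simp

lemma um_sum_less: assumes "finite S" "m > 0" "\<forall>i\<in>S. v (f i) < m" shows "v (sum f S) < m"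
  using assms(1,3)
proof (induction S rule: finite_induct)
  case empty then show ?case using assms(2) av_eq0[OF av] by simp
next
  case (insert x F)
  then have "max (v (f x)) (v (sum f F)) < m" by simp
  with um_add[of "f x" "sum f F"] insert.hyps show ?case by (simp add: max_def split: if_splits)
qed

lemma newton:
  fixes c :: "nat \<Rightarrow> 'k" and x :: 'k
  assumes x0: "x \<noteq> 0" and nz: "\<exists>i\<le>n. c i \<noteq> 0" and rel: "(\<Sum>i\<le>n. c i * x ^ i) = 0"
  shows "\<exists>i j. i < j \<and> j \<le> n \<and> c i \<noteq> 0 \<and> c j \<noteq> 0 \<and> v (c i) * v x ^ i = v (c j) * v x ^ j"
proof -
  define T where "T i = v (c i * x ^ i)" for i
  define m where "m = Max (T ` {..n})"
  have fin: "finite (T ` {..n})" by simp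
  have "m \<in> T ` {..n}" using Max_in[OF fin] m_def by auto
  then obtain i0 where i0: "i0 \<le> n" "T i0 = m" by auto
  have Tle: "T i \<le> m" if "i \<le> n" for i using that m_def fin by simp
  obtain i1 where i1: "i1 \<le> n" "c i1 \<noteq> 0" using nz by blast
  have Tpos: "T i > 0" if "c i \<noteq> 0" for i
    using that x0 unfolding T_def by (simp add: av_pos[OF av])
  have mpos: "m > 0" using Tpos[OF i1(2)] Tle[OF i1(1)] by simp
  have "\<exists>j\<le>n. j \<noteq> i0 \<and> T j = m"
  proof (rule ccontr)
    assume "\<not> ?thesis"
    then have lt: "\<forall>j\<in>{..n} - {i0}. v (c j * x ^ j) < m" using Tle T_def by force
    have "(\<Sum>i\<le>n. c i * x ^ i) = c i0 * x ^ i0 + (\<Sum>i\<in>{..n} - {i0}. c i * x ^ i)"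
      using i0(1) by (simp add: sum.remove)
    moreover have "v (\<Sum>i\<in>{..n} - {i0}. c i * x ^ i) < m"
      by (rule um_sum_less) (use mpos lt in auto)
    ultimately have "v (\<Sum>i\<le>n. c i * x ^ i) = m"
      using um_strict i0(2) T_def by auto
    then show False using rel mpos av_eq0[OF av] by simp
  qed
  then obtain j where j: "j \<le> n" "j \<noteq> i0" "T j = m" by blast
  have cnz: "c i \<noteq> 0" if "T i = m" for i using that mpos T_def av_eq0[OF av] by auto
  have eq: "v (c i0) * v x ^ i0 = v (c j) * v x ^ j"
    using i0(2) j(3) unfolding T_def by (simp add: av_mult[OF av] av_power[OF av])
  show ?thesis
  proof (cases "i0 < j")
    case True then show ?thesis using eq j cnz i0 by blast
  next
    case False then have "j < i0" using j(2) by simp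
    then show ?thesis using eq j cnz i0 by (intro exI[of _ j] exI[of _ i0]) auto
  qed
qed

end

lemma hom_system:
  fixes B :: "'j set"
  assumes "finite B"
  shows "\<And>(I::'i set) (a :: 'i \<Rightarrow> 'j \<Rightarrow> 'f::field). finite I \<Longrightarrow> card B < card I \<Longrightarrow>
     \<exists>q. (\<exists>i\<in>I. q i \<noteq> 0) \<and> (\<forall>b\<in>B. (\<Sum>i\<in>I. q i * a i b) = 0)"
  using assms
proof (induction B rule: finite_induct)
  case empty
  then have "I \<noteq> {}" by auto
  then show ?case by (intro exI[of _ "\<lambda>_. 1"]) auto
next
  case (insert b B)
  note IH = insert.IH
  have cardB: "card B < card I" using insert.prems insert.hyps by simp
  show ?case
  proof (cases "\<forall>i\<in>I. a i b = 0")
    case True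
    obtain q where q: "\<exists>i\<in>I. q i \<noteq> 0" "\<forall>c\<in>B. (\<Sum>i\<in>I. q i * a i c) = 0"
      using IH[OF insert.prems(1) cardB] by blast
    then show ?thesis using True by (intro exI[of _ q]) auto
  next
    case False
    then obtain i0 where i0: "i0 \<in> I" "a i0 b \<noteq> 0" by blast
    define I' where "I' = I - {i0}"
    have finI': "finite I'" using insert.prems I'_def by simp
    have cardI': "card B < card I'" using insert.prems insert.hyps i0 I'_def by simp
    define a' where "a' i c = a i c - a i b / a i0 b * a i0 c" for i c
    obtain q' where q': "\<exists>i\<in>I'. q' i \<noteq> 0" "\<forall>c\<in>B. (\<Sum>i\<in>I'. q' i * a' i c) = 0"
      using IH[OF finI' cardI'] by blast
    define S where "S = (\<Sum>i\<in>I'. q' i * a i b)"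
    define q where "q i = (if i = i0 then - S / a i0 b else q' i)" for i
    have split: "(\<Sum>i\<in>I. q i * a i c) = q i0 * a i0 c + (\<Sum>i\<in>I'. q' i * a i c)" for c
    proof -
      have "(\<Sum>i\<in>I. q i * a i c) = q i0 * a i0 c + (\<Sum>i\<in>I'. q i * a i c)"
        using i0(1) insert.prems(1) I'_def by (simp add: sum.remove)
      moreover have "(\<Sum>i\<in>I'. q i * a i c) = (\<Sum>i\<in>I'. q' i * a i c)"
        by (rule sum.cong) (auto simp: q_def I'_def)
      ultimately show ?thesis by simp
    qed
    have "\<forall>c\<in>insert b B. (\<Sum>i\<in>I. q i * a i c) = 0"
    proof
      fix c assume c: "c \<in> insert b B"
      show "(\<Sum>i\<in>I. q i * a i c) = 0"
      proof (cases "c = b")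
        case True
        then show ?thesis using split[of b] i0(2) by (simp add: q_def S_def)
      next
        case False
        then have cB: "c \<in> B" using c by simp
        have "0 = (\<Sum>i\<in>I'. q' i * a' i c)" using q'(2) cB by simp
        also have "\<dots> = (\<Sum>i\<in>I'. q' i * a i c) - S / a i0 b * a i0 c"
          unfolding a'_def S_def
          by (simp add: algebra_simps sum_subtractf sum_distrib_left sum_distrib_right sum_divide_distrib)
        finally have "(\<Sum>i\<in>I'. q' i * a i c) = S / a i0 b * a i0 c" by simp
        then show ?thesis using split[of c] by (simp add: q_def)
      qed
    qed
    moreover have "\<exists>i\<in>I. q i \<noteq> 0" using q'(1) unfolding q_def I'_def by auto
    ultimately show ?thesis by blast
  qed
qed

lemma span_dep:
  fixes B :: "'k::field_char_0 set" and y :: "'i \<Rightarrow> 'k"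
  assumes finB: "finite B" and span: "\<forall>x::'k. \<exists>c::'k \<Rightarrow> rat. x = (\<Sum>b\<in>B. of_rat (c b) * b)"
    and finI: "finite I" and card: "card B < card I"
  shows "\<exists>q::'i \<Rightarrow> rat. (\<exists>i\<in>I. q i \<noteq> 0) \<and> (\<Sum>i\<in>I. of_rat (q i) * y i) = 0"
proof -
  obtain C where C: "\<And>x. x = (\<Sum>b\<in>B. of_rat (C x b) * b)" using span by metis
  obtain q where q: "\<exists>i\<in>I. q i \<noteq> 0" "\<forall>b\<in>B. (\<Sum>i\<in>I. q i * C (y i) b) = 0"
    using hom_system[OF finB finI card, of "\<lambda>i b. C (y i) b"] by blast
  have "(\<Sum>i\<in>I. of_rat (q i) * y i) = (\<Sum>i\<in>I. of_rat (q i) * (\<Sum>b\<in>B. of_rat (C (y i) b) * b))"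
    using C by (metis)
  also have "\<dots> = (\<Sum>i\<in>I. \<Sum>b\<in>B. of_rat (q i * C (y i) b) * b)"
    by (simp add: sum_distrib_left of_rat_mult mult.assoc)
  also have "\<dots> = (\<Sum>b\<in>B. \<Sum>i\<in>I. of_rat (q i * C (y i) b) * b)"
    by (rule sum.swap)
  also have "\<dots> = (\<Sum>b\<in>B. of_rat (\<Sum>i\<in>I. q i * C (y i) b) * b)"
    by (simp add: of_rat_sum sum_distrib_right)
  also have "\<dots> = 0" using q(2) by simp
  finally show ?thesis using q(1) by blast
qed

lemma nf_basis:
  assumes "number_field TYPE('k)"
  obtains B :: "'k::field_char_0 set" where "finite B" "\<forall>x::'k. \<exists>c::'k \<Rightarrow> rat. x = (\<Sum>b\<in>B. of_rat (c b) * b)"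
  using assms unfolding number_field_def by blast

lemma alg_rel:
  fixes B :: "'k::field_char_0 set" and x :: 'k
  assumes finB: "finite B" and span: "\<forall>x::'k. \<exists>c::'k \<Rightarrow> rat. x = (\<Sum>b\<in>B. of_rat (c b) * b)"
  shows "\<exists>c::nat \<Rightarrow> rat. (\<exists>i\<le>card B. c i \<noteq> 0) \<and> (\<Sum>i\<le>card B. of_rat (c i) * x ^ i) = 0"
  using span_dep[OF finB span, of "{..card B}" "\<lambda>i. x ^ i"] by auto

lemma ev_big: fixes a K :: real assumes "a > 1" shows "eventually (\<lambda>r. a ^ r > K) sequentially"
proof -
  obtain n where n: "K < a ^ n" using real_arch_pow[OF assms] by blast
  have "\<forall>r\<ge>n. a ^ r > K"
  proof (intro allI impI)
    fix r assume "n \<le> r"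
    then have "a ^ n \<le> a ^ r" using assms by (intro power_increasing) auto
    then show "a ^ r > K" using n by simp
  qed
  then show ?thesis unfolding eventually_sequentially by blast
qed

lemma ev_small: fixes a e :: real assumes "0 \<le> a" "a < 1" "e > 0" shows "eventually (\<lambda>r. a ^ r < e) sequentially"
  using order_tendstoD(2)[OF LIMSEQ_realpow_zero[OF assms(1,2)] assms(3)] .

lemma ev_ex: "eventually P sequentially \<Longrightarrow> \<exists>r. P r"
proof -
  assume "eventually P sequentially"
  then obtain N where "\<forall>n\<ge>N. P n" unfolding eventually_sequentially by blast
  then show "\<exists>r. P r" using order_refl by blast
qed

lemma ln_powi: fixes c :: real assumes "c > 0" shows "ln (c powi m) = of_int m * ln c"
proof -
  have "c powi m = exp (ln c) powi m" using assms by simp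
  also have "\<dots> = exp (of_int m * ln c)" by (rule exp_power_int)
  finally show ?thesis by simp
qed

lemma sep_two:
  fixes v w :: "'k::field \<Rightarrow> real"
  assumes av: "abs_value v" and aw: "abs_value w" and ne: "v \<noteq> w"
    and vr: "v \<rho> = c" and wr: "w \<rho> = c" and c1: "c > 1"
  shows "\<exists>x. v x > 1 \<and> w x < 1"
proof -
  obtain y0 where y0: "v y0 \<noteq> w y0" using ne by blast
  have "\<exists>y. v y > w y"
  proof (cases "v y0 > w y0")
    case True then show ?thesis by blast
  next
    case False
    then have lt: "v y0 < w y0" using y0 by simp
    then have "y0 \<noteq> 0" using av_zero[OF av] av_zero[OF aw] by auto
    then have "v (inverse y0) > w (inverse y0)"
      using lt av_pos[OF av] av_pos[OF aw] by (simp add: av_inverse[OF av] av_inverse[OF aw] less_imp_inverse_less)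
    then show ?thesis by blast
  qed
  then obtain y where yg: "v y > w y" by blast
  define a where "a = v y"
  define b where "b = w y"
  have "y \<noteq> 0" using yg av_zero[OF av] av_zero[OF aw] by auto
  then have b0: "b > 0" using av_pos[OF aw] b_def by simp
  have ab: "a > b" using yg a_def b_def by simp
  have a0: "a > 0" using ab b0 by simp
  have "a / b > 1" using ab b0 by simp
  then obtain k where k: "c < (a / b) ^ k" using real_arch_pow by blast
  have lnc: "ln c > 0" using c1 by simp
  have kab: "real k * (ln a - ln b) > ln c"
  proof -
    have "ln c < ln ((a / b) ^ k)" using k c1 by (simp add: ln_less_cancel_iff)
    also have "\<dots> = real k * (ln a - ln b)" using a0 b0 by (simp add: ln_realpow ln_div)
    finally show ?thesis .
  qed
  define s where "s = - (real k * ln b) / ln c"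
  define m where "m = \<lceil>s\<rceil> - 1"
  have m1: "of_int m < s" unfolding m_def by linarith
  have m2: "of_int m \<ge> s - 1" unfolding m_def by linarith
  have r0: "\<rho> \<noteq> 0" using vr c1 av_zero[OF av] by auto
  define x where "x = y ^ k * \<rho> powi m"
  have vx: "v x = a ^ k * c powi m" unfolding x_def a_def
    by (simp add: av_mult[OF av] av_power[OF av] av_power_int[OF av] vr)
  have wx: "w x = b ^ k * c powi m" unfolding x_def b_def
    by (simp add: av_mult[OF aw] av_power[OF aw] av_power_int[OF aw] wr)
  have c0: "c > 0" using c1 by simp
  have lnvx: "ln (v x) = real k * ln a + of_int m * ln c"
    using vx a0 c0 by (simp add: ln_mult ln_realpow ln_powi)
  have lnwx: "ln (w x) = real k * ln b + of_int m * ln c"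
    using wx b0 c0 by (simp add: ln_mult ln_realpow ln_powi)
  have "of_int m * ln c < s * ln c" using m1 lnc by (rule mult_strict_right_mono)
  also have "s * ln c = - (real k * ln b)" unfolding s_def using lnc by simp
  finally have A: "of_int m * ln c < - (real k * ln b)" .
  have "(s - 1) * ln c \<le> of_int m * ln c" using m2 lnc by (intro mult_right_mono) auto
  then have B: "- (real k * ln b) - ln c \<le> of_int m * ln c" unfolding s_def using lnc by (simp add: algebra_simps)
  have vxpos: "v x > 0" using vx a0 c0 by simp
  have wxpos: "w x > 0" using wx b0 c0 by simp
  have "ln (v x) > 0" using lnvx B kab by (simp add: algebra_simps)
  then have "v x > 1" using vxpos by (simp add: ln_gt_zero_iff)
  moreover have "ln (w x) < 0" using lnwx A by simp
  then have "w x < 1" using wxpos by (simp add: ln_less_zero_iff)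
  ultimately show ?thesis by blast
qed

lemma sep_many:
  fixes V :: "('k::field \<Rightarrow> real) set"
  assumes av: "\<forall>u\<in>V. abs_value u" and rho: "\<forall>u\<in>V. u \<rho> = c" and c1: "c > 1"
    and vV: "v \<in> V"
  shows "finite W \<Longrightarrow> W \<subseteq> V - {v} \<Longrightarrow> \<exists>y. v y > 1 \<and> (\<forall>u\<in>W. u y < 1)"
proof (induction W rule: finite_induct)
  case empty
  then show ?case using rho vV c1 by (intro exI[of _ \<rho>]) auto
next
  case (insert w W)
  have avv: "abs_value v" using av vV by blast
  have wV: "w \<in> V" "w \<noteq> v" using insert.prems by auto
  have avw: "abs_value w" using av wV by blast
  have avu: "abs_value u" if "u \<in> W" for u using av insert.prems that by blast
  obtain y where y: "v y > 1" "\<forall>u\<in>W. u y < 1" using insert.IH insert.prems by blast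
  obtain z where z: "v z > 1" "w z < 1"
    using sep_two[OF avv avw _ _ _ c1, of \<rho>] wV rho vV by metis
  show ?case
  proof (cases "w y \<le> 1")
    case True
    have evu: "eventually (\<lambda>r. \<forall>u\<in>W. u y ^ r < 1 / (u z + 1)) sequentially"
    proof (rule eventually_ball_finite[OF insert.hyps(1)], intro ballI)
      fix u assume u: "u \<in> W"
      show "eventually (\<lambda>r. u y ^ r < 1 / (u z + 1)) sequentially"
        using ev_small[of "u y" "1 / (u z + 1)"] y(2) u av_nonneg[OF avu[OF u], of z] av_nonneg[OF avu[OF u], of y] by auto
    qed
    obtain r where r: "\<forall>u\<in>W. u y ^ r < 1 / (u z + 1)" using ev_ex[OF evu] by blast
    define x where "x = y ^ r * z"
    have "v x > 1"
    proof -
      have "1 \<le> v y ^ r" using y(1) by (simp add: one_le_power)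
      then have "1 * 1 < v y ^ r * v z" using z(1) by (intro mult_le_less_imp_less) auto
      then show ?thesis unfolding x_def by (simp add: av_mult[OF avv] av_power[OF avv])
    qed
    moreover have "w x < 1"
    proof -
      have "w y ^ r \<le> 1" using True av_nonneg[OF avw] by (simp add: power_le_one)
      then have "w y ^ r * w z \<le> 1 * w z" using av_nonneg[OF avw, of z] by (intro mult_right_mono) auto
      then show ?thesis using z(2) unfolding x_def by (simp add: av_mult[OF avw] av_power[OF avw])
    qed
    moreover have "u x < 1" if u: "u \<in> W" for u
    proof -
      have nz: "u z \<ge> 0" "u y ^ r \<ge> 0" using av_nonneg[OF avu[OF u]] by auto
      have "u y ^ r < 1 / (u z + 1)" using r u by blast
      then have "u y ^ r * (u z + 1) < 1" using nz by (simp add: field_simps)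
      then have "u y ^ r * u z < 1" using nz by (simp add: algebra_simps)
      then show ?thesis unfolding x_def by (simp add: av_mult[OF avu[OF u]] av_power[OF avu[OF u]])
    qed
    ultimately show ?thesis by blast
  next
    case False
    then have wy: "w y > 1" by simp
    have vz1: "v z - 1 > 0" and wz1: "1 - w z > 0" using z by auto
    have e1: "eventually (\<lambda>r. v y ^ r > 2) sequentially" using ev_big[OF y(1)] .
    have e2: "eventually (\<lambda>r. v y ^ r > 1 / (v z - 1)) sequentially" using ev_big[OF y(1)] .
    have e3: "eventually (\<lambda>r. w y ^ r > 1 / (1 - w z)) sequentially" using ev_big[OF wy] .
    have e4: "eventually (\<lambda>r. \<forall>u\<in>W. u y ^ r < 1 / (u z + 1)) sequentially"
    proof (rule eventually_ball_finite[OF insert.hyps(1)], intro ballI)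
      fix u assume u: "u \<in> W"
      show "eventually (\<lambda>r. u y ^ r < 1 / (u z + 1)) sequentially"
        using ev_small[of "u y" "1 / (u z + 1)"] y(2) u av_nonneg[OF avu[OF u], of z] av_nonneg[OF avu[OF u], of y] by auto
    qed
    obtain r where r1: "v y ^ r > 2" and r2: "v y ^ r > 1 / (v z - 1)"
      and r3: "w y ^ r > 1 / (1 - w z)" and r4: "\<forall>u\<in>W. u y ^ r < 1 / (u z + 1)"
      using ev_ex[OF eventually_conj[OF e1 eventually_conj[OF e2 eventually_conj[OF e3 e4]]]] by blast
    define Y where "Y = y ^ r"
    define x where "x = Y * z / (1 + Y)"
    have "v x > 1"
    proof -
      have vY: "v Y = v y ^ r" unfolding Y_def by (simp add: av_power[OF avv])
      have d1: "v (1 + Y) \<le> 1 + v Y" using av_tri[OF avv, of 1 Y] av_one[OF avv] by simp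
      have d2: "v (1 + Y) \<ge> v Y - 1" using av_rev_tri[OF avv, of Y 1] av_one[OF avv] by (simp add: add.commute)
      have dpos: "v (1 + Y) > 0" using d2 r1 vY by simp
      have "v Y * (v z - 1) > 1" using r2 vz1 vY by (simp add: field_simps)
      then have num: "v Y * v z > 1 + v Y" by (simp add: algebra_simps)
      have "v x = v Y * v z / v (1 + Y)" unfolding x_def by (simp add: av_mult[OF avv] av_divide[OF avv])
      also have "\<dots> > 1" using num d1 dpos by (simp add: field_simps)
      finally show ?thesis .
    qed
    moreover have "w x < 1"
    proof -
      have wY: "w Y = w y ^ r" unfolding Y_def by (simp add: av_power[OF avw])
      have d2: "w (1 + Y) \<ge> w Y - 1" using av_rev_tri[OF avw, of Y 1] av_one[OF avw] by (simp add: add.commute)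
      have "w Y * (1 - w z) > 1" using r3 wz1 wY by (simp add: field_simps)
      then have num: "w Y * w z < w Y - 1" by (simp add: algebra_simps)
      have nn: "w Y * w z \<ge> 0" using av_nonneg[OF avw] by simp
      have dpos: "w (1 + Y) > 0" using d2 num nn by simp
      have "w x = w Y * w z / w (1 + Y)" unfolding x_def by (simp add: av_mult[OF avw] av_divide[OF avw])
      also have "\<dots> < 1" using num d2 dpos by (simp add: field_simps)
      finally show ?thesis .
    qed
    moreover have "u x < 1" if u: "u \<in> W" for u
    proof -
      note au = avu[OF u]
      have uY: "u Y = u y ^ r" unfolding Y_def by (simp add: av_power[OF au])
      have d2: "u (1 + Y) \<ge> 1 - u Y" using av_rev_tri[OF au, of 1 Y] av_one[OF au] by simp
      have nz: "u z \<ge> 0" "u Y \<ge> 0" using av_nonneg[OF au] by auto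
      have "u Y < 1 / (u z + 1)" using r4 u uY by simp
      then have "u Y * (u z + 1) < 1" using nz by (simp add: field_simps)
      then have num: "u Y * u z < 1 - u Y" by (simp add: algebra_simps)
      have nn: "u Y * u z \<ge> 0" using nz by simp
      have dpos: "u (1 + Y) > 0" using d2 num nn by simp
      have "u x = u Y * u z / u (1 + Y)" unfolding x_def by (simp add: av_mult[OF au] av_divide[OF au])
      also have "\<dots> < 1" using num d2 dpos by (simp add: field_simps)
      finally show ?thesis .
    qed
    ultimately show ?thesis by blast
  qed
qed

lemma card_bound:
  fixes Bs :: "'k::field_char_0 set" and V :: "('k \<Rightarrow> real) set"
  assumes finB: "finite Bs" and span: "\<forall>x::'k. \<exists>c::'k \<Rightarrow> rat. x = (\<Sum>b\<in>Bs. of_rat (c b) * b)"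
    and av: "\<forall>u\<in>V. abs_value u" and rho: "\<forall>u\<in>V. u \<rho> = c" and c1: "c > 1"
    and agree: "\<forall>u\<in>V. \<forall>u'\<in>V. \<forall>q. u (of_rat q) = u' (of_rat q)"
    and finW: "finite W" and WV: "W \<subseteq> V"
  shows "card W \<le> card Bs"
proof (rule ccontr)
  assume "\<not> ?thesis"
  then have big: "card Bs < card W" by simp
  then have Wne: "W \<noteq> {}" by auto
  have "\<forall>v\<in>W. \<exists>y. v y > 1 \<and> (\<forall>u\<in>W - {v}. u y < 1)"
    using sep_many[OF av rho c1] finW WV by (meson Diff_mono finite_Diff order_refl subsetD)
  then obtain y where y: "\<And>v. v \<in> W \<Longrightarrow> v (y v) > 1 \<and> (\<forall>u\<in>W - {v}. u (y v) < 1)" by metis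
  define M where "M = Min ((\<lambda>v. v (y v)) ` W)"
  have M1: "M > 1" unfolding M_def using finW Wne y by auto
  have Mle: "M \<le> v (y v)" if "v \<in> W" for v unfolding M_def using finW that by auto
  obtain r where r: "real (card W) < M ^ r" using real_arch_pow[OF M1] by blast
  obtain q where q: "\<exists>i\<in>W. q i \<noteq> 0" "(\<Sum>i\<in>W. of_rat (q i) * (y i) ^ r) = 0"
    using span_dep[OF finB span finW big, of "\<lambda>i. (y i) ^ r"] by blast
  obtain v0 where v0: "v0 \<in> W" using Wne by blast
  define R where "R i = v0 (of_rat (q i))" for i
  define Rm where "Rm = Max (R ` W)"
  have "Rm \<in> R ` W" unfolding Rm_def using finW Wne by simp
  then obtain vm where vm: "vm \<in> W" "R vm = Rm" by blast
  have Rle: "R i \<le> R vm" if "i \<in> W" for i using vm finW that unfolding Rm_def by simp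
  have avm: "abs_value vm" using av WV vm by blast
  have Rvm: "vm (of_rat (q i)) = R i" if "i \<in> W" for i
    unfolding R_def using agree WV vm v0 by blast
  obtain i1 where i1: "i1 \<in> W" "q i1 \<noteq> 0" using q(1) by blast
  have av0: "abs_value v0" using av WV v0 by blast
  have "of_rat (q i1) \<noteq> (0::'k)" using i1 by simp
  then have "R i1 > 0" unfolding R_def using av_pos[OF av0] by blast
  then have Rpos: "R vm > 0" using Rle[OF i1(1)] by simp
  define T where "T i = of_rat (q i) * (y i) ^ r" for i
  have sumsplit: "(\<Sum>i\<in>W. T i) = T vm + (\<Sum>i\<in>W - {vm}. T i)"
    using vm(1) finW by (simp add: sum.remove)
  have rest: "vm (\<Sum>i\<in>W - {vm}. T i) \<le> real (card W - 1) * R vm"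
  proof -
    have "vm (\<Sum>i\<in>W - {vm}. T i) \<le> (\<Sum>i\<in>W - {vm}. vm (T i))" by (rule av_sum_le[OF avm])
    also have "\<dots> \<le> (\<Sum>i\<in>W - {vm}. R vm)"
    proof (rule sum_mono)
      fix i assume i: "i \<in> W - {vm}"
      have "vm (y i) < 1" using y[of i] i vm(1) by auto
      then have p: "vm (y i) ^ r \<le> 1" using av_nonneg[OF avm] by (simp add: power_le_one)
      have "vm (T i) = R i * vm (y i) ^ r" unfolding T_def using i Rvm by (simp add: av_mult[OF avm] av_power[OF avm])
      also have "\<dots> \<le> R vm * 1"
        using Rle[of i] i p av_nonneg[OF avm] Rpos by (intro mult_mono) auto
      finally show "vm (T i) \<le> R vm" by simp
    qed
    also have "\<dots> = real (card W - 1) * R vm" using vm(1) finW by simp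
    finally show ?thesis .
  qed
  have main: "vm (T vm) \<ge> R vm * M ^ r"
  proof -
    have "vm (T vm) = R vm * vm (y vm) ^ r" unfolding T_def using vm(1) Rvm by (simp add: av_mult[OF avm] av_power[OF avm])
    moreover have "M ^ r \<le> vm (y vm) ^ r" using Mle[OF vm(1)] M1 by (intro power_mono) auto
    ultimately show ?thesis using Rpos by simp
  qed
  have "vm (\<Sum>i\<in>W. T i) \<ge> vm (T vm) - vm (\<Sum>i\<in>W - {vm}. T i)"
    using sumsplit av_rev_tri[OF avm] by simp
  also have "vm (T vm) - vm (\<Sum>i\<in>W - {vm}. T i) \<ge> R vm * M ^ r - real (card W - 1) * R vm"
    using main rest by simp
  finally have "vm (\<Sum>i\<in>W. T i) \<ge> R vm * (M ^ r - real (card W - 1))" by (simp add: algebra_simps)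
  moreover have "M ^ r - real (card W - 1) > 0" using r by linarith
  ultimately have "vm (\<Sum>i\<in>W. T i) > 0" using Rpos by (smt (verit) mult_pos_pos)
  moreover have "(\<Sum>i\<in>W. T i) = 0" using q(2) unfolding T_def by simp
  ultimately show False using av_zero[OF avm] by simp
qed

lemma finite_common:
  fixes V :: "('k::field_char_0 \<Rightarrow> real) set"
  assumes nf: "number_field TYPE('k)"
    and av: "\<forall>u\<in>V. abs_value u" and rho: "\<forall>u\<in>V. u \<rho> = c" and c1: "c > 1"
    and agree: "\<forall>u\<in>V. \<forall>u'\<in>V. \<forall>q. u (of_rat q) = u' (of_rat q)"
  shows "finite V"
proof (rule ccontr)
  assume inf: "infinite V"
  obtain Bs :: "'k set" where B: "finite Bs" "\<forall>x::'k. \<exists>c::'k \<Rightarrow> rat. x = (\<Sum>b\<in>Bs. of_rat (c b) * b)"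
    using nf_basis[OF nf] by blast
  obtain W where W: "W \<subseteq> V" "finite W" "card W = Suc (card Bs)"
    using infinite_arbitrarily_large[OF inf] by blast
  have "card W \<le> card Bs" using card_bound[OF B av rho c1 agree W(2,1)] .
  then show False using W(3) by simp
qed

lemma place_av: "v \<in> places \<Longrightarrow> abs_value v" unfolding places_def by blast

lemma nonarch_padic:
  assumes "v \<in> places" "\<not> archimedean v"
  obtains p where "prime p" "extends_padic p v"
  using assms unfolding places_def archimedean_def by blast

lemma padic_int_le1:
  assumes av: "abs_value v" and pp: "prime p" and ep: "extends_padic p v"
  shows "v (of_int n) \<le> 1"
proof (cases "n = 0")
  case True then show ?thesis using av_zero[OF av] by simp
next
  case False
  then have eq: "v (of_int n) = real p powr (- real (multiplicity (int p) n))" using ep unfolding extends_padic_def by blast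
  have p1: "real p \<ge> 1" using prime_ge_1_nat[OF pp] by simp
  have "1 \<le> real p powr real (multiplicity (int p) n)" using p1 by (intro ge_one_powr_ge_zero) auto
  then show ?thesis unfolding eq powr_minus by (simp add: inverse_le_1_iff)
qed

lemma nonarch_ultra:
  assumes "v \<in> places" "\<not> archimedean v" shows "ultra v"
proof -
  obtain p where "prime p" "extends_padic p v" using nonarch_padic[OF assms] by blast
  then show ?thesis using ultra_of_int[OF place_av[OF assms(1)]] padic_int_le1[OF place_av[OF assms(1)]] by blast
qed

lemma av_of_rat:
  fixes v :: "'k::field_char_0 \<Rightarrow> real"
  assumes av: "abs_value v" and qo: "quotient_of q = (a, b)"
  shows "v (of_rat q) = v (of_int a) / v (of_int b)"
proof -
  have "q = of_int a / of_int b" using quotient_of_div[OF qo] .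
  then have "(of_rat q :: 'k) = of_int a / of_int b" by (simp add: of_rat_divide)
  then show ?thesis by (simp add: av_divide[OF av])
qed

lemma agree_of_int:
  fixes u u' :: "'k::field_char_0 \<Rightarrow> real"
  assumes au: "abs_value u" and au': "abs_value u'" and eq: "\<forall>n::int. u (of_int n) = u' (of_int n)"
  shows "u (of_rat q) = u' (of_rat q)"
proof -
  obtain a b where qo: "quotient_of q = (a, b)" by (cases "quotient_of q") auto
  show ?thesis using av_of_rat[OF au qo] av_of_rat[OF au' qo] eq by simp
qed

lemma finite_arch:
  assumes nf: "number_field TYPE('k::field_char_0)"
  shows "finite {v::'k \<Rightarrow> real. v \<in> places \<and> extends_arch v}"
proof (rule finite_common[OF nf, of _ "of_int 2" 2])
  show "\<forall>u\<in>{v::'k \<Rightarrow> real. v \<in> places \<and> extends_arch v}. abs_value u" using place_av by blast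
  show "\<forall>u\<in>{v::'k \<Rightarrow> real. v \<in> places \<and> extends_arch v}. u (of_int 2) = 2"
  proof
    fix u :: "'k \<Rightarrow> real" assume "u \<in> {v::'k \<Rightarrow> real. v \<in> places \<and> extends_arch v}"
    then have "u (of_int 2) = \<bar>real_of_int 2\<bar>" unfolding extends_arch_def by blast
    then show "u (of_int 2) = 2" by simp
  qed
  show "(1::real) < 2" by simp
  show "\<forall>u\<in>{v::'k \<Rightarrow> real. v \<in> places \<and> extends_arch v}. \<forall>u'\<in>{v::'k \<Rightarrow> real. v \<in> places \<and> extends_arch v}. \<forall>q. u (of_rat q) = u' (of_rat q)"
  proof (intro ballI allI)
    fix u u' :: "'k \<Rightarrow> real" and q
    assume u: "u \<in> {v. v \<in> places \<and> extends_arch v}" and u': "u' \<in> {v. v \<in> places \<and> extends_arch v}"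
    have "\<forall>n::int. u (of_int n) = u' (of_int n)" using u u' unfolding extends_arch_def by simp
    then show "u (of_rat q) = u' (of_rat q)" using agree_of_int[OF place_av place_av] u u' by blast
  qed
qed

lemma mult_self_p: assumes "prime p" shows "multiplicity (int p) (int p) = 1"
proof -
  have "p > 1" using prime_gt_1_nat[OF assms] .
  then have "int p \<noteq> 0" "\<not> (int p dvd 1)" by auto
  then show ?thesis by (rule multiplicity_self)
qed

lemma finite_padic:
  assumes nf: "number_field TYPE('k::field_char_0)" and pp: "prime p"
  shows "finite {v::'k \<Rightarrow> real. v \<in> places \<and> extends_padic p v}"
proof (rule finite_common[OF nf, of _ "inverse (of_int (int p))" "real p"])
  show "\<forall>u\<in>{v::'k \<Rightarrow> real. v \<in> places \<and> extends_padic p v}. abs_value u" using place_av by blast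
  show "\<forall>u\<in>{v::'k \<Rightarrow> real. v \<in> places \<and> extends_padic p v}. u (inverse (of_int (int p))) = real p"
  proof
    fix u :: "'k \<Rightarrow> real" assume u: "u \<in> {v. v \<in> places \<and> extends_padic p v}"
    have p0: "int p \<noteq> 0" using pp by auto
    have "u (of_int (int p)) = real p powr (- real (multiplicity (int p) (int p)))"
      using u p0 unfolding extends_padic_def by blast
    also have "\<dots> = inverse (real p)" using mult_self_p[OF pp] pp by (simp add: powr_minus)
    finally show "u (inverse (of_int (int p))) = real p"
      using av_inverse[OF place_av, of u] u by simp
  qed
  show "1 < real p" using prime_gt_1_nat[OF pp] by simp
  show "\<forall>u\<in>{v::'k \<Rightarrow> real. v \<in> places \<and> extends_padic p v}. \<forall>u'\<in>{v::'k \<Rightarrow> real. v \<in> places \<and> extends_padic p v}. \<forall>q. u (of_rat q) = u' (of_rat q)"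
  proof (intro ballI allI)
    fix u u' :: "'k \<Rightarrow> real" and q
    assume u: "u \<in> {v. v \<in> places \<and> extends_padic p v}" and u': "u' \<in> {v. v \<in> places \<and> extends_padic p v}"
    have "\<forall>n::int. u (of_int n) = u' (of_int n)"
    proof
      fix n :: int
      show "u (of_int n) = u' (of_int n)"
      proof (cases "n = 0")
        case True then show ?thesis using av_zero[OF place_av[of u]] av_zero[OF place_av[of u']] u u' by simp
      next
        case False then show ?thesis using u u' unfolding extends_padic_def by simp
      qed
    qed
    then show "u (of_rat q) = u' (of_rat q)" using agree_of_int[OF place_av place_av] u u' by blast
  qed
qed

lemma padic_rat_unit:
  fixes v :: "'k::field_char_0 \<Rightarrow> real"
  assumes av: "abs_value v" and ep: "extends_padic p v" and qo: "quotient_of q = (a, b)"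
    and q0: "q \<noteq> 0" and na: "\<not> int p dvd a" and nb: "\<not> int p dvd b" and pp: "prime p"
  shows "v (of_rat q) = 1"
proof -
  have "p > 0" using prime_gt_0_nat[OF pp] .
  have a0: "a \<noteq> 0" using q0 quotient_of_div[OF qo] by auto
  have b0: "b \<noteq> 0" using quotient_of_denom_pos[OF qo] by simp
  have "v (of_int a) = real p powr (- real (multiplicity (int p) a))" using ep a0 unfolding extends_padic_def by blast
  also have "\<dots> = 1" using not_dvd_imp_multiplicity_0[OF na] \<open>p > 0\<close> by simp
  finally have "v (of_int a) = 1" .
  have "v (of_int b) = real p powr (- real (multiplicity (int p) b))" using ep b0 unfolding extends_padic_def by blast
  also have "\<dots> = 1" using not_dvd_imp_multiplicity_0[OF nb] \<open>p > 0\<close> by simp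
  finally have "v (of_int b) = 1" .
  then show ?thesis using \<open>v (of_int a) = 1\<close> av_of_rat[OF av qo] by simp
qed

lemma padic_rat_ln:
  fixes v :: "'k::field_char_0 \<Rightarrow> real"
  assumes av: "abs_value v" and ep: "extends_padic p v" and pp: "prime p" and q0: "q \<noteq> 0"
  shows "\<exists>m::int. ln (v (of_rat q)) = of_int m * ln (real p)"
proof -
  obtain a b where qo: "quotient_of q = (a, b)" by (cases "quotient_of q") auto
  have a0: "a \<noteq> 0" using q0 quotient_of_div[OF qo] by auto
  have b0: "b \<noteq> 0" using quotient_of_denom_pos[OF qo] by simp
  have p0: "real p > 0" using prime_gt_0_nat[OF pp] by simp
  have "v (of_int a) = real p powr (- real (multiplicity (int p) a))" using ep a0 unfolding extends_padic_def by simp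
  moreover have "v (of_int b) = real p powr (- real (multiplicity (int p) b))" using ep b0 unfolding extends_padic_def by simp
  ultimately have "ln (v (of_rat q)) = of_int (int (multiplicity (int p) b) - int (multiplicity (int p) a)) * ln (real p)"
    using av_of_rat[OF av qo] p0 by (simp add: ln_div algebra_simps)
  then show ?thesis by blast
qed

lemma pow_eq_one: fixes x :: real assumes "x \<ge> 0" "x ^ i = x ^ j" "i < j" "x \<noteq> 0" shows "x = 1"
proof -
  have "x ^ j = x ^ i * x ^ (j - i)" using assms(3) by (simp add: power_add[symmetric])
  then have "x ^ (j - i) = 1 ^ (j - i)" using assms by simp
  then show ?thesis using power_eq_imp_eq_base[of x "j - i" 1] assms by simp
qed

lemma finite_bad:
  fixes \<beta> :: "'k::field_char_0"
  assumes nf: "number_field TYPE('k)" and b0: "\<beta> \<noteq> 0"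
  shows "finite {v::'k \<Rightarrow> real. v \<in> places \<and> \<not> archimedean v \<and> v \<beta> \<noteq> 1}"
proof -
  obtain Bs :: "'k set" where B: "finite Bs" "\<forall>x::'k. \<exists>c::'k \<Rightarrow> rat. x = (\<Sum>b\<in>Bs. of_rat (c b) * b)"
    using nf_basis[OF nf] by blast
  define n where "n = card Bs"
  obtain c where c: "\<exists>i\<le>n. c i \<noteq> 0" "(\<Sum>i\<le>n. of_rat (c i) * \<beta> ^ i) = 0"
    using alg_rel[OF B, of \<beta>] unfolding n_def by blast
  define P where "P = (\<Union>i\<in>{i. i \<le> n \<and> c i \<noteq> 0}. {p::nat. int p dvd fst (quotient_of (c i)) \<or> int p dvd snd (quotient_of (c i))})"
  have finP: "finite P"
    unfolding P_def
  proof (rule finite_UN_I)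
    show "finite {i. i \<le> n \<and> c i \<noteq> 0}" by simp
    fix i assume i: "i \<in> {i. i \<le> n \<and> c i \<noteq> 0}"
    obtain a b where qo: "quotient_of (c i) = (a, b)" by (cases "quotient_of (c i)") auto
    have a0: "a \<noteq> 0" using i quotient_of_div[OF qo] by auto
    have b0: "b \<noteq> 0" using quotient_of_denom_pos[OF qo] by simp
    have "{p::nat. int p dvd a \<or> int p dvd b} \<subseteq> {..nat \<bar>a\<bar> + nat \<bar>b\<bar>}"
    proof
      fix p assume "p \<in> {p::nat. int p dvd a \<or> int p dvd b}"
      then have "int p \<le> \<bar>a\<bar> \<or> int p \<le> \<bar>b\<bar>" using dvd_imp_le_int[OF a0, of "int p"] dvd_imp_le_int[OF b0, of "int p"] by auto
      then show "p \<in> {..nat \<bar>a\<bar> + nat \<bar>b\<bar>}" by auto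
    qed
    then have "finite {p::nat. int p dvd a \<or> int p dvd b}" by (rule finite_subset) simp
    then show "finite {p::nat. int p dvd fst (quotient_of (c i)) \<or> int p dvd snd (quotient_of (c i))}"
      using qo by simp
  qed
  have sub: "{v::'k \<Rightarrow> real. v \<in> places \<and> \<not> archimedean v \<and> v \<beta> \<noteq> 1} \<subseteq> (\<Union>p\<in>{p\<in>P. prime p}. {v. v \<in> places \<and> extends_padic p v})"
  proof
    fix v :: "'k \<Rightarrow> real" assume v: "v \<in> {v. v \<in> places \<and> \<not> archimedean v \<and> v \<beta> \<noteq> 1}"
    have av: "abs_value v" using v place_av by blast
    obtain p where pp: "prime p" "extends_padic p v" using nonarch_padic v by blast
    have um: "ultra v" using nonarch_ultra v by blast
    have "p \<in> P"
    proof (rule ccontr)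
      assume pP: "p \<notin> P"
      have units: "v (of_rat (c i)) = 1" if "i \<le> n" "c i \<noteq> 0" for i
      proof -
        obtain a b where qo: "quotient_of (c i) = (a, b)" by (cases "quotient_of (c i)") auto
        have "\<not> (int p dvd fst (quotient_of (c i)) \<or> int p dvd snd (quotient_of (c i)))"
          using pP that unfolding P_def by blast
        then have "\<not> int p dvd a" "\<not> int p dvd b" using qo by auto
        then show ?thesis using padic_rat_unit[OF av pp(2) qo that(2) _ _ pp(1)] by blast
      qed
      have nz: "\<exists>i\<le>n. (of_rat (c i)::'k) \<noteq> 0" using c(1) by simp
      obtain i j where ij: "i < j" "j \<le> n" "of_rat (c i) \<noteq> (0::'k)" "of_rat (c j) \<noteq> (0::'k)"
        "v (of_rat (c i)) * v \<beta> ^ i = v (of_rat (c j)) * v \<beta> ^ j"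
        using newton[OF av um b0 nz c(2)] by blast
      then have "v \<beta> ^ i = v \<beta> ^ j" using units[of i] units[of j] ij by simp
      then have "v \<beta> = 1" using pow_eq_one[OF av_nonneg[OF av] _ ij(1)] av_pos[OF av b0] by simp
      then show False using v by simp
    qed
    then show "v \<in> (\<Union>p\<in>{p\<in>P. prime p}. {v. v \<in> places \<and> extends_padic p v})" using pp v by blast
  qed
  have "finite (\<Union>p\<in>{p\<in>P. prime p}. {v::'k \<Rightarrow> real. v \<in> places \<and> extends_padic p v})"
  proof (rule finite_UN_I)
    show "finite {p\<in>P. prime p}" using finP by simp
    fix p assume "p \<in> {p\<in>P. prime p}"
    then show "finite {v::'k \<Rightarrow> real. v \<in> places \<and> extends_padic p v}" using finite_padic[OF nf] by blast
  qed
  then show ?thesis by (rule finite_subset[OF sub])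
qed

lemma padic_p_val:
  fixes v :: "'k::field_char_0 \<Rightarrow> real"
  assumes pp: "prime p" and ep: "extends_padic p v"
  shows "v (of_int (int p)) = inverse (real p)"
proof -
  have p0: "int p \<noteq> 0" using pp by auto
  have "v (of_int (int p)) = real p powr (- real (multiplicity (int p) (int p)))"
    using ep p0 unfolding extends_padic_def by blast
  also have "\<dots> = inverse (real p)" using mult_self_p[OF pp] pp by (simp add: powr_minus)
  finally show ?thesis .
qed

lemma ln_val_disc:
  fixes v :: "'k::field_char_0 \<Rightarrow> real"
  assumes nf: "number_field TYPE('k)" and av: "abs_value v" and pp: "prime p" and ep: "extends_padic p v"
  shows "\<exists>N::nat. N > 0 \<and> (\<forall>x. x \<noteq> 0 \<longrightarrow> (\<exists>m::int. real N * ln (v x) = of_int m * ln (real p)))"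
proof -
  obtain Bs :: "'k set" where B: "finite Bs" "\<forall>x::'k. \<exists>c::'k \<Rightarrow> rat. x = (\<Sum>b\<in>Bs. of_rat (c b) * b)"
    using nf_basis[OF nf] by blast
  define n where "n = card Bs"
  have um: "ultra v" using ultra_of_int[OF av] padic_int_le1[OF av pp ep] by blast
  have "\<exists>m::int. real (fact n) * ln (v x) = of_int m * ln (real p)" if x0: "x \<noteq> 0" for x
  proof -
    obtain c where c: "\<exists>i\<le>n. c i \<noteq> 0" "(\<Sum>i\<le>n. of_rat (c i) * x ^ i) = 0"
      using alg_rel[OF B, of x] unfolding n_def by blast
    have nz: "\<exists>i\<le>n. (of_rat (c i)::'k) \<noteq> 0" using c(1) by simp
    obtain i j where ij: "i < j" "j \<le> n" "of_rat (c i) \<noteq> (0::'k)" "of_rat (c j) \<noteq> (0::'k)"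
      "v (of_rat (c i)) * v x ^ i = v (of_rat (c j)) * v x ^ j"
      using newton[OF av um x0 nz c(2)] by blast
    have ci: "c i \<noteq> 0" "c j \<noteq> 0" using ij by auto
    obtain mi where mi: "ln (v (of_rat (c i))) = of_int mi * ln (real p)" using padic_rat_ln[OF av ep pp ci(1)] by blast
    obtain mj where mj: "ln (v (of_rat (c j))) = of_int mj * ln (real p)" using padic_rat_ln[OF av ep pp ci(2)] by blast
    have vx: "v x > 0" using av_pos[OF av x0] .
    have vci: "v (of_rat (c i)) > 0" "v (of_rat (c j)) > 0" using av_pos[OF av] ij by auto
    have "ln (v (of_rat (c i)) * v x ^ i) = ln (v (of_rat (c j)) * v x ^ j)" using ij(5) by simp
    then have "ln (v (of_rat (c i))) + real i * ln (v x) = ln (v (of_rat (c j))) + real j * ln (v x)"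
      using vx vci by (simp add: ln_mult ln_realpow)
    then have eq: "(real j - real i) * ln (v x) = of_int (mi - mj) * ln (real p)"
      using mi mj by (simp add: algebra_simps)
    have "j - i dvd fact n" using ij by (intro dvd_fact) auto
    then obtain t where t: "fact n = (j - i) * t" by blast
    have "real (fact n) = (real j - real i) * real t" using t ij(1) by (simp add: of_nat_diff)
    then have "real (fact n) * ln (v x) = real t * ((real j - real i) * ln (v x))" by simp
    also have "\<dots> = of_int (int t * (mi - mj)) * ln (real p)" using eq by simp
    finally show ?thesis by blast
  qed
  moreover have "fact n > (0::nat)" by simp
  ultimately show ?thesis by blast
qed

lemma uniformizer_exists:
  fixes v :: "'k::field_char_0 \<Rightarrow> real"
  assumes nf: "number_field TYPE('k)" and av: "abs_value v" and pp: "prime p" and ep: "extends_padic p v"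
  shows "\<exists>\<pi>. uniformizer v \<pi>"
proof -
  obtain N :: nat where NN: "N > 0 \<and> (\<forall>x. x \<noteq> 0 \<longrightarrow> (\<exists>m::int. real N * ln (v x) = of_int m * ln (real p)))"
    using ln_val_disc[OF nf av pp ep] by blast
  have N0: "N > 0" using NN by blast
  have disc: "\<exists>m::int. real N * ln (v x) = of_int m * ln (real p)" if "x \<noteq> 0" for x using NN \<open>x \<noteq> 0\<close> by blast
  have "real p > 1" using prime_gt_1_nat[OF pp] by simp
  then have lnp: "ln (real p) > 0" by (rule ln_gt_zero)
  define G where "G = {m::int. \<exists>x. x \<noteq> 0 \<and> real N * ln (v x) = of_int m * ln (real p)}"
  have G_diff: "m1 - m2 \<in> G" if "m1 \<in> G" "m2 \<in> G" for m1 m2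
  proof -
    obtain x1 where x1: "x1 \<noteq> 0" "real N * ln (v x1) = of_int m1 * ln (real p)" using \<open>m1 \<in> G\<close> unfolding G_def by blast
    obtain x2 where x2: "x2 \<noteq> 0" "real N * ln (v x2) = of_int m2 * ln (real p)" using \<open>m2 \<in> G\<close> unfolding G_def by blast
    have "ln (v (x1 / x2)) = ln (v x1) - ln (v x2)"
      using av_pos[OF av x1(1)] av_pos[OF av x2(1)] by (simp add: av_divide[OF av] ln_div)
    then have "real N * ln (v (x1 / x2)) = real N * ln (v x1) - real N * ln (v x2)" by (simp add: right_diff_distrib)
    also have "\<dots> = of_int m1 * ln (real p) - of_int m2 * ln (real p)" using x1(2) x2(2) by (simp only:)
    also have "\<dots> = of_int (m1 - m2) * ln (real p)" by (simp add: left_diff_distrib)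
    finally have e: "real N * ln (v (x1 / x2)) = of_int (m1 - m2) * ln (real p)" .
    have "x1 / x2 \<noteq> 0" using x1 x2 by simp
    then show ?thesis unfolding G_def mem_Collect_eq using e by blast
  qed
  have G_mult: "m * j \<in> G" if "m \<in> G" for m j
  proof -
    obtain x where x: "x \<noteq> 0" "real N * ln (v x) = of_int m * ln (real p)" using \<open>m \<in> G\<close> unfolding G_def by blast
    have "ln (v (x powi j)) = of_int j * ln (v x)"
      using av_pos[OF av x(1)] by (simp add: av_power_int[OF av] ln_powi)
    then have "real N * ln (v (x powi j)) = of_int j * (real N * ln (v x))" by (simp only: mult.left_commute)
    also have "\<dots> = of_int j * (of_int m * ln (real p))" using x(2) by (simp only:)
    also have "\<dots> = of_int (m * j) * ln (real p)" by simp
    finally have e: "real N * ln (v (x powi j)) = of_int (m * j) * ln (real p)" .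
    have "x powi j \<noteq> 0" using x by simp
    then show ?thesis unfolding G_def mem_Collect_eq using e by blast
  qed
  have NG: "int N \<in> G"
  proof -
    have "v (inverse (of_int (int p))) = real p" using padic_p_val[OF pp ep] av_inverse[OF av] by simp
    moreover have "inverse (of_int (int p)) \<noteq> (0::'k)" using pp by auto
    ultimately show ?thesis unfolding G_def by (intro CollectI exI[of _ "inverse (of_int (int p))"]) simp
  qed
  define g where "g = (LEAST k::nat. k > 0 \<and> int k \<in> G)"
  have gex: "N > 0 \<and> int N \<in> G" using N0 NG by simp
  have g: "g > 0" "int g \<in> G" using LeastI[of "\<lambda>k. k > 0 \<and> int k \<in> G", OF gex] g_def by auto
  have gmin: "g \<le> k" if "k > 0" "int k \<in> G" for k using Least_le[of "\<lambda>k. k > 0 \<and> int k \<in> G" k] \<open>k > 0\<close> \<open>int k \<in> G\<close> g_def by auto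
  have Gdvd: "m = int g * (m div int g)" if "m \<in> G" for m
  proof -
    define r where "r = m mod int g"
    have "r = m - int g * (m div int g)" using mult_div_mod_eq[of "int g" m] unfolding r_def by linarith
    moreover have "int g * (m div int g) \<in> G" using G_mult[OF g(2)] .
    ultimately have rG: "r \<in> G" using G_diff[OF \<open>m \<in> G\<close>] by simp
    have r0: "r \<ge> 0" "r < int g" unfolding r_def using g(1) by auto
    have "r = 0"
    proof (rule ccontr)
      assume "r \<noteq> 0"
      then have "nat r > 0" "int (nat r) \<in> G" using r0 rG by auto
      then have "g \<le> nat r" using gmin by blast
      then show False using r0 by linarith
    qed
    then show ?thesis using mult_div_mod_eq[of "int g" m] unfolding r_def by simp
  qed
  obtain xg where xg: "xg \<noteq> 0" "real N * ln (v xg) = of_int (int g) * ln (real p)" using g(2) unfolding G_def by blast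
  define \<pi> where "\<pi> = inverse xg"
  have pi0: "\<pi> \<noteq> 0" using xg unfolding \<pi>_def by simp
  have vpi: "v \<pi> > 0" using av_pos[OF av pi0] .
  have Lpi: "ln (v \<pi>) = - (real g * ln (real p)) / real N"
  proof -
    have "ln (v \<pi>) = - ln (v xg)" unfolding \<pi>_def using av_pos[OF av xg(1)] by (simp add: av_inverse[OF av] ln_inverse)
    then show ?thesis using xg(2) N0 by (simp add: field_simps)
  qed
  have "ln (v \<pi>) < 0" using Lpi g(1) lnp N0 by (simp add: divide_neg_pos)
  then have pi1: "v \<pi> < 1" using vpi by (simp add: ln_less_zero_iff)
  have "\<exists>k. v x = v \<pi> powi k" if x0: "x \<noteq> 0" for x
  proof -
    obtain m where m: "real N * ln (v x) = of_int m * ln (real p)" using disc[OF x0] by blast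
    have "m \<in> G" unfolding G_def using x0 m by blast
    then have mg: "m = int g * (m div int g)" by (rule Gdvd)
    define j where "j = m div int g"
    have lnx: "ln (v x) = of_int (- j) * ln (v \<pi>)"
    proof -
      have "m = int g * j" using mg unfolding j_def .
      then have "(of_int m :: real) = real g * of_int j" by simp
      then have A: "real N * ln (v x) = real g * of_int j * ln (real p)" using m by simp
      have B: "real N * ln (v \<pi>) = - (real g * ln (real p))" using Lpi N0 by simp
      have "real N * (of_int (- j) * ln (v \<pi>)) = - (of_int j * (real N * ln (v \<pi>)))" by (simp add: algebra_simps)
      also have "\<dots> = real g * of_int j * ln (real p)" using B by simp
      finally have "real N * ln (v x) = real N * (of_int (- j) * ln (v \<pi>))" using A by simp
      moreover have N0': "real N \<noteq> 0" using N0 by simp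
      ultimately show ?thesis by (simp only: mult_left_cancel[OF N0'])
    qed
    have "v x = exp (ln (v x))" using av_pos[OF av x0] by simp
    also have "\<dots> = exp (of_int (- j) * ln (v \<pi>))" by (simp only: lnx)
    also have "\<dots> = exp (ln (v \<pi>)) powi (- j)" by (simp add: exp_power_int)
    also have "\<dots> = v \<pi> powi (- j)" using vpi by simp
    finally show ?thesis by blast
  qed
  then show ?thesis unfolding uniformizer_def using pi0 pi1 by blast
qed

lemma powi_inj:
  fixes a :: real assumes "0 < a" "a < 1" "a powi k1 = a powi k2" shows "k1 = k2"
proof (rule ccontr)
  assume "k1 \<noteq> k2"
  then consider "k1 < k2" | "k2 < k1" by linarith
  then show False
  proof cases
    case 1 then show False using power_int_strict_decreasing[OF 1 assms(1,2)] assms(3) by simp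
  next
    case 2 then show False using power_int_strict_decreasing[OF 2 assms(1,2)] assms(3) by simp
  qed
qed

lemma nval_eq:
  fixes v :: "'k::field \<Rightarrow> real"
  assumes av: "abs_value v" and ex: "\<exists>\<pi>. uniformizer v \<pi>" and eq: "v x = v (SOME \<pi>. uniformizer v \<pi>) powi k"
  shows "nval v x = k"
proof -
  define \<pi> where "\<pi> = (SOME \<pi>. uniformizer v \<pi>)"
  have u: "uniformizer v \<pi>" unfolding \<pi>_def using someI_ex[OF ex] .
  have pos: "v \<pi> > 0" "v \<pi> < 1" using u av_pos[OF av] unfolding uniformizer_def by auto
  show ?thesis unfolding nval_def
  proof (rule the_equality)
    show "v x = v (SOME \<pi>. uniformizer v \<pi>) powi k" by (rule eq)
    fix k' assume "v x = v (SOME \<pi>. uniformizer v \<pi>) powi k'"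
    then have "v \<pi> powi k' = v \<pi> powi k" using eq unfolding \<pi>_def by simp
    then show "k' = k" using powi_inj[OF pos] by blast
  qed
qed

lemma nval_power:
  fixes v :: "'k::field \<Rightarrow> real"
  assumes av: "abs_value v" and ex: "\<exists>\<pi>. uniformizer v \<pi>" and z0: "z \<noteq> 0" and eq: "v t = v z ^ e"
  shows "nval v t = int e * nval v z"
proof -
  define \<pi> where "\<pi> = (SOME \<pi>. uniformizer v \<pi>)"
  have u: "uniformizer v \<pi>" unfolding \<pi>_def using someI_ex[OF ex] .
  obtain k where k: "v z = v \<pi> powi k" using u z0 unfolding uniformizer_def by blast
  have "nval v z = k" using nval_eq[OF av ex] k unfolding \<pi>_def by blast
  moreover have "v t = v \<pi> powi (k * int e)" using eq k by (simp add: power_int_power')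
  then have "nval v t = k * int e" using nval_eq[OF av ex] unfolding \<pi>_def by blast
  ultimately show ?thesis by simp
qed

lemma prod_list_const: "(\<forall>b\<in>set xs. f b = c) \<Longrightarrow> prod_list (map f xs) = c ^ length xs"
  by (induction xs) auto

lemma prod_list_bounds:
  fixes f :: "'a \<Rightarrow> real"
  assumes "\<forall>b\<in>set xs. a \<le> f b \<and> f b \<le> c" "0 \<le> a"
  shows "a ^ length xs \<le> prod_list (map f xs) \<and> prod_list (map f xs) \<le> c ^ length xs"
  using assms(1)
proof (induction xs)
  case Nil then show ?case by simp
next
  case (Cons x xs)
  then have fx: "a \<le> f x" "f x \<le> c" and IH: "a ^ length xs \<le> prod_list (map f xs)" "prod_list (map f xs) \<le> c ^ length xs" by auto
  have pa: "0 \<le> a ^ length xs" using assms(2) by simp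
  have pp: "0 \<le> prod_list (map f xs)" using pa IH(1) by linarith
  have "a * a ^ length xs \<le> f x * prod_list (map f xs)"
    using fx IH pa assms(2) by (intro mult_mono) auto
  moreover have "f x * prod_list (map f xs) \<le> c * c ^ length xs"
    using fx IH pa pp assms(2) by (intro mult_mono) auto
  ultimately show ?case by simp
qed

lemma v_famf: "abs_value v \<Longrightarrow> v (famf e \<beta> t z) = prod_list (map (\<lambda>b. v (z ^ e - b * t)) \<beta>)"
  unfolding famf_def by (simp add: av_prod_list comp_def)

lemma um_famf:
  assumes av: "abs_value v" and um: "ultra v" and small: "\<forall>b\<in>set \<beta>. v (b * t) < v z ^ e"
  shows "v (famf e \<beta> t z) = v z ^ (e * length \<beta>)"
proof -
  have "\<forall>b\<in>set \<beta>. v (z ^ e - b * t) = v z ^ e"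
    using small um_strict_diff[OF av um] av_power[OF av] by simp
  then have pc: "prod_list (map (\<lambda>b. v (z ^ e - b * t)) \<beta>) = (v z ^ e) ^ length \<beta>"
    by (rule prod_list_const)
  have "v (famf e \<beta> t z) = (v z ^ e) ^ length \<beta>"
    using v_famf[OF av, of e \<beta> t z] pc by simp
  then show ?thesis by (simp add: power_mult)
qed

lemma um_orbit:
  assumes av: "abs_value v" and um: "ultra v" and z1: "v z > 1" and small: "\<forall>b\<in>set \<beta>. v (b * t) < v z ^ e"
    and dpos: "e * length \<beta> > 0"
  shows "v ((famf e \<beta> t ^^ n) z) = v z ^ ((e * length \<beta>) ^ n)"
proof (induction n)
  case 0 then show ?case by simp
next
  case (Suc n)
  define w where "w = (famf e \<beta> t ^^ n) z"
  have vw: "v w = v z ^ ((e * length \<beta>) ^ n)" using Suc w_def by simp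
  have "v z ^ e \<le> v w ^ e"
  proof -
    have "1 \<le> (e * length \<beta>) ^ n" using one_le_power[of "e * length \<beta>" n] dpos by linarith
    then have "v z ^ 1 \<le> v z ^ ((e * length \<beta>) ^ n)" using z1 by (intro power_increasing) auto
    then have "v z \<le> v w" using vw by simp
    then show ?thesis using z1 by (intro power_mono) auto
  qed
  then have "\<forall>b\<in>set \<beta>. v (b * t) < v w ^ e" using small by fastforce
  then have "v (famf e \<beta> t w) = v w ^ (e * length \<beta>)" by (rule um_famf[OF av um])
  then show ?case using vw unfolding w_def by (simp add: power_mult[symmetric] mult.commute)
qed

lemma logp_ln: "x \<ge> 1 \<Longrightarrow> logp x = ln x" unfolding logp_def by simp

lemma green_exact:
  assumes c1: "c > 1" and d0: "d > 0" and orb: "\<forall>n. v ((g ^^ n) z) = c ^ (d ^ n)"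
  shows "green d g v z = ln c"
proof -
  have "logp (v ((g ^^ n) z)) / real d ^ n = ln c" for n
  proof -
    have "c ^ (d ^ n) \<ge> 1" using c1 by simp
    then have "logp (v ((g ^^ n) z)) = real (d ^ n) * ln c" using orb c1 by (simp add: logp_ln ln_realpow)
    then show ?thesis using d0 by simp
  qed
  then show ?thesis unfolding green_def by simp
qed

lemma green_exact_shift:
  assumes c1: "c > 1" and d0: "d > 0" and orb: "\<forall>n. v ((g ^^ n) (g z)) = c ^ (d ^ n)"
  shows "green d g v z = ln c / real d"
proof -
  have "logp (v ((g ^^ Suc n) z)) / real d ^ Suc n = ln c / real d" for n
  proof -
    have "(g ^^ Suc n) z = (g ^^ n) (g z)" by (simp add: funpow_Suc_right del: funpow.simps)
    moreover have "c ^ (d ^ n) \<ge> 1" using c1 by simp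
    ultimately have "logp (v ((g ^^ Suc n) z)) = real (d ^ n) * ln c" using orb c1 by (simp add: logp_ln ln_realpow)
    then show ?thesis using d0 by simp
  qed
  then have "(\<lambda>n. logp (v ((g ^^ Suc n) z)) / real d ^ Suc n) \<longlonglongrightarrow> ln c / real d" by simp
  then have "(\<lambda>n. logp (v ((g ^^ n) z)) / real d ^ n) \<longlonglongrightarrow> ln c / real d"
    by (rule filterlim_sequentially_Suc[THEN iffD1])
  then show ?thesis unfolding green_def by (rule limI)
qed

lemma orbit_infinite:
  fixes c :: real
  assumes c1: "c > 1" and d2: "d \<ge> 2" and orb: "\<forall>n. v ((g ^^ n) w) = c ^ (d ^ n)"
  shows "infinite {(g ^^ n) w | n. True}"
proof -
  have "strict_mono (\<lambda>n. c ^ (d ^ n))"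
  proof (rule strict_monoI)
    fix m n :: nat assume "m < n"
    then have "d ^ m < d ^ n" using d2 by (intro power_strict_increasing) auto
    then show "c ^ (d ^ m) < c ^ (d ^ n)" using power_strict_increasing[of "d ^ m" "d ^ n" c] c1 by simp
  qed
  then have "inj (\<lambda>n. c ^ (d ^ n))" by (rule strict_mono_imp_inj_on)
  then have "inj (\<lambda>n. (g ^^ n) w)"
  proof -
    assume ic: "inj (\<lambda>n. c ^ (d ^ n))"
    show ?thesis
    proof (rule injI)
      fix m n assume "(g ^^ m) w = (g ^^ n) w"
      then have "v ((g ^^ m) w) = v ((g ^^ n) w)" by simp
      then have "c ^ (d ^ m) = c ^ (d ^ n)" using orb by simp
      moreover have "\<forall>x y. c ^ (d ^ x) = c ^ (d ^ y) \<longrightarrow> x = y" using ic unfolding inj_def by simp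
      ultimately show "m = n" by blast
    qed
  qed
  then have "infinite (range (\<lambda>n. (g ^^ n) w))" by (rule range_inj_infinite)
  moreover have "{(g ^^ n) w | n. True} = range (\<lambda>n. (g ^^ n) w)" by auto
  ultimately show ?thesis by simp
qed

lemma green_conv:
  fixes a :: "nat \<Rightarrow> real" and D C :: real
  assumes D2: "D \<ge> 2" and step: "\<forall>n. \<bar>a (Suc n) - D * a n\<bar> \<le> C"
  shows "\<bar>lim (\<lambda>n. a n / D ^ n) - a 0\<bar> \<le> C"
proof -
  have C0: "C \<ge> 0" using step by (meson abs_ge_zero order_trans)
  have D0: "D > 0" using D2 by simp
  define b where "b n = a n / D ^ n" for n
  define \<delta> where "\<delta> n = b (Suc n) - b n" for n
  define g where "g n = (C / D) * (1 / D) ^ n" for n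
  have \<delta>eq: "\<delta> n = (a (Suc n) - D * a n) / D ^ Suc n" for n
    unfolding \<delta>_def b_def using D0 by (simp add: field_simps)
  have \<delta>le: "\<bar>\<delta> n\<bar> \<le> g n" for n
  proof -
    have "\<bar>\<delta> n\<bar> = \<bar>a (Suc n) - D * a n\<bar> / D ^ Suc n" using \<delta>eq D0 by (simp add: abs_divide)
    also have "\<dots> \<le> C / D ^ Suc n" using step D0 by (intro divide_right_mono) auto
    also have "\<dots> = g n" unfolding g_def using D0 by (simp add: field_simps power_divide)
    finally show ?thesis .
  qed
  have q: "norm (1 / D) < 1" using D2 by simp
  have sg: "summable g" unfolding g_def by (intro summable_mult summable_geometric q)
  have sa: "summable (\<lambda>n. \<bar>\<delta> n\<bar>)"
    by (rule summable_comparison_test[OF _ sg]) (use \<delta>le in auto)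
  have sd: "summable \<delta>" using sa by (rule summable_rabs_cancel)
  have eqb: "(\<lambda>n. b 0 + (\<Sum>i<n. \<delta> i)) = b"
  proof
    fix n show "b 0 + (\<Sum>i<n. \<delta> i) = b n" unfolding \<delta>_def by (simp add: sum_lessThan_telescope)
  qed
  have "(\<lambda>n. b 0 + (\<Sum>i<n. \<delta> i)) \<longlonglongrightarrow> b 0 + suminf \<delta>"
    by (intro tendsto_add tendsto_const summable_LIMSEQ sd)
  then have "b \<longlonglongrightarrow> b 0 + suminf \<delta>" unfolding eqb .
  then have L: "lim b = b 0 + suminf \<delta>" by (rule limI)
  have "\<bar>suminf \<delta>\<bar> \<le> (\<Sum>n. \<bar>\<delta> n\<bar>)" by (rule summable_rabs[OF sa])
  also have "\<dots> \<le> suminf g" by (rule suminf_le[OF \<delta>le sa sg])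
  also have "suminf g = (C / D) * suminf (\<lambda>n. (1 / D) ^ n)"
    unfolding g_def by (rule suminf_mult[OF summable_geometric[OF q]])
  also have "\<dots> = (C / D) * (1 / (1 - 1 / D))" using suminf_geometric[OF q] by simp
  also have "\<dots> = C / (D - 1)" using D2 by (simp add: field_simps)
  also have "\<dots> \<le> C"
  proof -
    have "C * 1 \<le> C * (D - 1)" using D2 C0 by (intro mult_left_mono) auto
    then show ?thesis using D2 by (simp add: divide_le_eq)
  qed
  finally have "\<bar>suminf \<delta>\<bar> \<le> C" .
  moreover have "b 0 = a 0" unfolding b_def by simp
  moreover have bfun: "(\<lambda>n. a n / D ^ n) = b" by (rule ext) (simp add: b_def)
  ultimately show ?thesis using L by (simp only: bfun)
qed

lemma elem_le_sum_list:
  fixes f :: "'a \<Rightarrow> real"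
  assumes "\<forall>x\<in>set xs. 0 \<le> f x" "b \<in> set xs"
  shows "f b \<le> sum_list (map f xs)"
  using assms
proof (induction xs)
  case Nil then show ?case by simp
next
  case (Cons x xs)
  show ?case
  proof (cases "b = x")
    case True
    have "0 \<le> sum_list (map f xs)" using Cons.prems(1) by (intro sum_list_nonneg) auto
    then show ?thesis using True by simp
  next
    case False
    then have "f b \<le> sum_list (map f xs)" using Cons by simp
    moreover have "0 \<le> f x" using Cons.prems(1) by simp
    ultimately show ?thesis by simp
  qed
qed

lemma arch_step:
  fixes v :: "'k::field \<Rightarrow> real"
  assumes av: "abs_value v" and M: "M = sum_list (map v \<beta>)"
    and w: "v w ^ e \<ge> 2 * M * max 1 (v t)"
  shows "v w ^ (e * length \<beta>) / 2 ^ length \<beta> \<le> v (famf e \<beta> t w) \<and>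
         v (famf e \<beta> t w) \<le> 2 ^ length \<beta> * v w ^ (e * length \<beta>)"
proof -
  have bt: "v (b * t) \<le> v w ^ e / 2" if b: "b \<in> set \<beta>" for b
  proof -
    have vb: "v b \<le> M" unfolding M using elem_le_sum_list[of \<beta> v b] b av_nonneg[OF av] by simp
    have "v (b * t) = v b * v t" by (rule av_mult[OF av])
    also have "\<dots> \<le> M * max 1 (v t)" using vb av_nonneg[OF av, of b] av_nonneg[OF av, of t] by (intro mult_mono) auto
    also have "\<dots> \<le> v w ^ e / 2" using w by simp
    finally show ?thesis .
  qed
  have fb: "\<forall>b\<in>set \<beta>. v w ^ e / 2 \<le> v (w ^ e - b * t) \<and> v (w ^ e - b * t) \<le> 2 * v w ^ e"
  proof
    fix b assume b: "b \<in> set \<beta>"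
    have l: "v (w ^ e) - v (b * t) \<le> v (w ^ e - b * t)" by (rule av_rev_tri_diff[OF av])
    have u: "v (w ^ e - b * t) \<le> v (w ^ e) + v (b * t)" by (rule av_diff_tri[OF av])
    have n: "0 \<le> v (b * t)" by (rule av_nonneg[OF av])
    show "v w ^ e / 2 \<le> v (w ^ e - b * t) \<and> v (w ^ e - b * t) \<le> 2 * v w ^ e"
      using l u n bt[OF b] av_power[OF av, of w e] by linarith
  qed
  have nn: "0 \<le> v w ^ e / 2" using av_nonneg[OF av] by simp
  have pb: "(v w ^ e / 2) ^ length \<beta> \<le> prod_list (map (\<lambda>b. v (w ^ e - b * t)) \<beta>) \<and>
      prod_list (map (\<lambda>b. v (w ^ e - b * t)) \<beta>) \<le> (2 * v w ^ e) ^ length \<beta>"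
    by (rule prod_list_bounds[OF fb nn])
  have e1: "(v w ^ e / 2) ^ length \<beta> = v w ^ (e * length \<beta>) / 2 ^ length \<beta>"
    by (simp add: power_divide power_mult)
  have e2: "(2 * v w ^ e) ^ length \<beta> = 2 ^ length \<beta> * v w ^ (e * length \<beta>)"
    by (simp add: power_mult_distrib power_mult)
  show ?thesis using pb v_famf[OF av, of e \<beta> t w] e1 e2 by simp
qed

lemma arch_reg:
  fixes v :: "'k::field \<Rightarrow> real"
  assumes av: "abs_value v" and M: "M = sum_list (map v \<beta>)" and d2: "e * length \<beta> \<ge> 2"
    and w1: "v w > 2 ^ length \<beta>" and w2: "v w ^ e \<ge> 2 * M * max 1 (v t)"
  shows "v (famf e \<beta> t w) \<ge> v w \<and> v (famf e \<beta> t w) > 2 ^ length \<beta> \<and>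
         v (famf e \<beta> t w) ^ e \<ge> 2 * M * max 1 (v t)"
proof -
  define d where "d = e * length \<beta>"
  have st: "v w ^ d / 2 ^ length \<beta> \<le> v (famf e \<beta> t w)"
    using arch_step[OF av M w2] unfolding d_def by blast
  have two: "(2::real) ^ length \<beta> \<ge> 1" by simp
  have w1': "v w \<ge> 1" using w1 two by linarith
  obtain r where r: "d = 2 + r" using d2 unfolding d_def using le_Suc_ex by blast
  have "v w ^ d = v w ^ 2 * v w ^ r" unfolding r by (rule power_add)
  moreover have "v w ^ r \<ge> 1" using w1' by (simp add: one_le_power)
  ultimately have "v w ^ d \<ge> v w ^ 2" using w1' by (simp add: mult_le_cancel_left1)
  moreover have "v w ^ 2 \<ge> v w * 2 ^ length \<beta>" using w1 w1' by (simp add: power2_eq_square mult_left_mono)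
  ultimately have "v w ^ d / 2 ^ length \<beta> \<ge> v w" by (simp add: le_divide_eq)
  then have fw: "v (famf e \<beta> t w) \<ge> v w" using st by linarith
  moreover have "v (famf e \<beta> t w) > 2 ^ length \<beta>" using fw w1 by linarith
  moreover have "v (famf e \<beta> t w) ^ e \<ge> v w ^ e" using fw w1' by (intro power_mono) auto
  ultimately show ?thesis using w2 by linarith
qed

lemma arch_green:
  fixes v :: "'k::field \<Rightarrow> real"
  assumes av: "abs_value v" and M: "M = sum_list (map v \<beta>)" and d2: "e * length \<beta> \<ge> 2"
    and z1: "v z > 2 ^ length \<beta>" and z2: "v z ^ e \<ge> 2 * M * max 1 (v t)"
  shows "\<bar>green (e * length \<beta>) (famf e \<beta> t) v z - ln (v z)\<bar> \<le> real (length \<beta>) * ln 2"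
proof -
  define f where "f = famf e \<beta> t"
  define k where "k = length \<beta>"
  define d where "d = e * length \<beta>"
  have reg: "v ((f ^^ n) z) > 2 ^ k \<and> v ((f ^^ n) z) ^ e \<ge> 2 * M * max 1 (v t)" for n
  proof (induction n)
    case 0 then show ?case using z1 z2 unfolding k_def by simp
  next
    case (Suc n)
    then show ?case using arch_reg[OF av M d2, of "(f ^^ n) z" t] unfolding f_def k_def by simp
  qed
  have two: "(2::real) ^ k \<ge> 1" by simp
  have pos: "v ((f ^^ n) z) > 1" for n using reg[of n] two by linarith
  define a where "a n = ln (v ((f ^^ n) z))" for n
  have step: "\<forall>n. \<bar>a (Suc n) - real d * a n\<bar> \<le> real k * ln 2"
  proof
    fix n
    define w where "w = (f ^^ n) z"
    have w0: "v w > 0" using pos[of n] unfolding w_def by simp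
    have bnd: "v w ^ d / 2 ^ k \<le> v (f w) \<and> v (f w) \<le> 2 ^ k * v w ^ d"
      using arch_step[OF av M, where w = w and e = e and t = t] reg[of n] unfolding w_def f_def d_def k_def by simp
    have "v w ^ d / 2 ^ k > 0" using w0 by simp
    then have fw0: "v (f w) > 0" using bnd by linarith
    have lo: "ln (v w ^ d / 2 ^ k) \<le> ln (v (f w))" using bnd w0 fw0 by (subst ln_le_cancel_iff) auto
    have hi: "ln (v (f w)) \<le> ln (2 ^ k * v w ^ d)" using bnd fw0 by (subst ln_le_cancel_iff) auto
    have l1: "ln (v w ^ d / 2 ^ k) = real d * ln (v w) - real k * ln 2" using w0 by (simp add: ln_div ln_realpow)
    have l2: "ln (2 ^ k * v w ^ d) = real k * ln 2 + real d * ln (v w)" using w0 by (simp add: ln_mult ln_realpow)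
    have X: "\<bar>ln (v (f w)) - real d * ln (v w)\<bar> \<le> real k * ln 2"
      unfolding abs_le_iff using lo hi l1 l2 by linarith
    have "a (Suc n) = ln (v (f w))" unfolding a_def w_def by simp
    moreover have "a n = ln (v w)" unfolding a_def w_def by simp
    ultimately show "\<bar>a (Suc n) - real d * a n\<bar> \<le> real k * ln 2" using X by simp
  qed
  have D2: "real d \<ge> 2" using d2 unfolding d_def by (metis of_nat_le_iff of_nat_numeral)
  have conv: "\<bar>lim (\<lambda>n. a n / real d ^ n) - a 0\<bar> \<le> real k * ln 2" by (rule green_conv[OF D2 step])
  have eqf: "(\<lambda>n. logp (v ((f ^^ n) z)) / real d ^ n) = (\<lambda>n. a n / real d ^ n)"
  proof
    fix n show "logp (v ((f ^^ n) z)) / real d ^ n = a n / real d ^ n"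
      unfolding a_def using pos[of n] by (simp add: logp_ln)
  qed
  have "green d f v z = lim (\<lambda>n. a n / real d ^ n)" unfolding green_def by (simp only: eqf)
  moreover have "a 0 = ln (v z)" unfolding a_def by simp
  ultimately show ?thesis using conv unfolding f_def d_def k_def by simp
qed

lemma hyp_unpack:
  fixes vz vt E :: real
  assumes vz: "vz > 0" and E1: "E \<ge> 1" and e0: "e > 0" and h: "ln vz > logp vt / real e + ln E"
  shows "vz > E \<and> vz ^ e > E ^ e * max 1 vt"
proof -
  have L0: "logp vt \<ge> 0" unfolding logp_def by simp
  have "ln vz > ln E" using h L0 e0 by (smt (verit) divide_nonneg_pos of_nat_0_less_iff)
  then have g1: "vz > E" using vz E1 by simp
  have "real e * ln vz > logp vt + real e * ln E" using h e0 by (simp add: field_simps)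
  then have "ln (vz ^ e) > ln (max 1 vt) + ln (E ^ e)" using vz E1 unfolding logp_def by (simp add: ln_realpow)
  also have "ln (max 1 vt) + ln (E ^ e) = ln (E ^ e * max 1 vt)" using E1 by (simp add: ln_mult)
  finally have "ln (E ^ e * max 1 vt) < ln (vz ^ e)" .
  then have "E ^ e * max 1 vt < vz ^ e" using vz E1 by (subst (asm) ln_less_cancel_iff) auto
  then show ?thesis using g1 by simp
qed

lemma um_orbit_le1:
  assumes av: "abs_value v" and um: "ultra v" and b1: "\<forall>b\<in>set \<beta>. v b \<le> 1" and t1: "v t \<le> 1" and z1: "v z \<le> 1"
  shows "v ((famf e \<beta> t ^^ n) z) \<le> 1"
proof (induction n)
  case 0 then show ?case using z1 by simp
next
  case (Suc n)
  define w where "w = (famf e \<beta> t ^^ n) z"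
  have w1: "v w \<le> 1" using Suc w_def by simp
  have fb: "\<forall>b\<in>set \<beta>. 0 \<le> v (w ^ e - b * t) \<and> v (w ^ e - b * t) \<le> 1"
  proof
    fix b assume b: "b \<in> set \<beta>"
    have "v (w ^ e - b * t) \<le> max (v (w ^ e)) (v (b * t))" by (rule um_diff_le[OF av um])
    moreover have "v (w ^ e) \<le> 1" using w1 av_nonneg[OF av, of w] by (simp add: av_power[OF av] power_le_one)
    moreover have "v (b * t) \<le> 1" using b1 b t1 av_nonneg[OF av, of b] av_nonneg[OF av, of t]
      by (simp add: av_mult[OF av] mult_le_one)
    ultimately show "0 \<le> v (w ^ e - b * t) \<and> v (w ^ e - b * t) \<le> 1" using av_nonneg[OF av] by simp
  qed
  have "prod_list (map (\<lambda>b. v (w ^ e - b * t)) \<beta>) \<le> 1 ^ length \<beta>"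
    using prod_list_bounds[OF fb] by simp
  then have "v (famf e \<beta> t w) \<le> 1" using v_famf[OF av, of e \<beta> t w] by simp
  then show ?case unfolding w_def by simp
qed

lemma green_zero:
  assumes "\<forall>n. v ((g ^^ n) z) \<le> 1"
  shows "green d g v z = 0"
proof -
  have "(\<lambda>n. logp (v ((g ^^ n) z)) / real d ^ n) = (\<lambda>n. 0)"
  proof
    fix n
    have "v ((g ^^ n) z) \<le> 1" using assms by blast
    then have "max 1 (v ((g ^^ n) z)) = 1" by simp
    then show "logp (v ((g ^^ n) z)) / real d ^ n = 0" unfolding logp_def by simp
  qed
  then show ?thesis unfolding green_def by simp
qed

theorem lemma2p1:
  fixes e :: nat and \<beta> :: "'k::field_char_0 list"
  assumes "number_field TYPE('k)"
    and "e \<ge> 2" and "\<beta> \<noteq> []" and "\<forall>b\<in>set \<beta>. b \<noteq> 0"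
  defines "d \<equiv> e * length \<beta>"
  shows
   "(\<exists>A B. MK_constant A \<and> MK_constant B \<and>
       (\<forall>v\<in>places. \<forall>t z::'k. z \<noteq> 0 \<longrightarrow>
          ln (v z) > logp (v t) / real e + A v \<longrightarrow>
          v (famf e \<beta> t z) \<ge> v z \<and>
          \<bar>green d (famf e \<beta> t) v z - ln (v z)\<bar> \<le> B v) \<and>
       (\<forall>v\<in>places. \<not> archimedean v \<longrightarrow> B v = 0))
    \<and> (\<exists>S. finite S \<and> S \<subseteq> places \<and>
       (\<forall>v\<in>places - S. \<not> archimedean v \<longrightarrow>
          (\<forall>t::'k. t \<noteq> 0 \<longrightarrow> \<not> (int e dvd nval v t) \<longrightarrow>
             (\<forall>z::'k. green d (famf e \<beta> t) v z \<ge> logp (v t) / real d))))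
    \<and> (\<exists>S. finite S \<and> S \<subseteq> places \<and>
       (\<forall>t::'k. \<forall>v\<in>places - S. v t > 1 \<longrightarrow>
          (\<forall>z::'k. preperiodic (famf e \<beta> t) z \<longrightarrow> v z ^ e = v t)))"
proof -
  note nf = assms(1)
  define k where "k = length \<beta>"
  have k1: "k \<ge> 1" using assms(3) unfolding k_def by (cases \<beta>) auto
  have e2: "e \<ge> 2" using assms(2) .
  have e0: "e > 0" using e2 by simp
  have dk: "d = e * k" unfolding d_def k_def by simp
  have d2: "e * length \<beta> \<ge> 2" using e2 k1 unfolding k_def by (metis mult_le_mono nat_mult_1_right)
  have dge: "d \<ge> e" using k1 unfolding dk by simp
  have d0: "d > 0" unfolding d_def using d2 by linarith
  define M where "M v = sum_list (map v \<beta>)" for v :: "'k \<Rightarrow> real"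
  define E where "E v = (if archimedean v then 2 ^ k + 2 * M v + 1
      else if (\<exists>b\<in>set \<beta>. v b > 1) then 1 + M v else 1)" for v :: "'k \<Rightarrow> real"
  define A where "A v = ln (E v)" for v :: "'k \<Rightarrow> real"
  define B where "B v = (if archimedean v then real k * ln 2 else 0)" for v :: "'k \<Rightarrow> real"
  define S0 where "S0 = {v::'k \<Rightarrow> real. v \<in> places \<and> archimedean v} \<union>
      (\<Union>b\<in>set \<beta>. {v::'k \<Rightarrow> real. v \<in> places \<and> \<not> archimedean v \<and> v b \<noteq> 1})"
  have finS0: "finite S0"
  proof -
    have "finite {v::'k \<Rightarrow> real. v \<in> places \<and> archimedean v}"
      using finite_arch[OF nf] unfolding archimedean_def .
    moreover have "finite (\<Union>b\<in>set \<beta>. {v::'k \<Rightarrow> real. v \<in> places \<and> \<not> archimedean v \<and> v b \<noteq> 1})"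
    proof (rule finite_UN_I)
      show "finite (set \<beta>)" by simp
      fix b assume "b \<in> set \<beta>"
      then have "b \<noteq> 0" using assms(4) by blast
      then show "finite {v::'k \<Rightarrow> real. v \<in> places \<and> \<not> archimedean v \<and> v b \<noteq> 1}"
        by (rule finite_bad[OF nf])
    qed
    ultimately show ?thesis unfolding S0_def by simp
  qed
  have S0sub: "S0 \<subseteq> places" unfolding S0_def by auto
  have good: "\<not> archimedean v \<and> (\<forall>b\<in>set \<beta>. v b = 1)" if "v \<in> places" "v \<notin> S0" for v
    using that unfolding S0_def by auto
  have M0: "M v \<ge> 0" if "abs_value v" for v
    unfolding M_def using av_nonneg[OF that] by (intro sum_list_nonneg) auto
  have Mb: "v b \<le> M v" if "abs_value v" "b \<in> set \<beta>" for v b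
    unfolding M_def using elem_le_sum_list[of \<beta> v b] that av_nonneg[OF that(1)] by simp
  have E1: "E v \<ge> 1" if "abs_value v" for v
    unfolding E_def using M0[OF that] by simp
  have P1: "\<exists>A B. MK_constant A \<and> MK_constant B \<and>
       (\<forall>v\<in>places. \<forall>t z::'k. z \<noteq> 0 \<longrightarrow>
          ln (v z) > logp (v t) / real e + A v \<longrightarrow>
          v (famf e \<beta> t z) \<ge> v z \<and>
          \<bar>green d (famf e \<beta> t) v z - ln (v z)\<bar> \<le> B v) \<and>
       (\<forall>v\<in>places. \<not> archimedean v \<longrightarrow> B v = 0)"
  proof (rule exI[of _ A], rule exI[of _ B], intro conjI)
    have "{v \<in> places. A v \<noteq> 0} \<subseteq> S0"
    proof
      fix v assume v: "v \<in> {v \<in> places. A v \<noteq> 0}"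
      show "v \<in> S0"
      proof (rule ccontr)
        assume "v \<notin> S0"
        then have "\<not> archimedean v" "\<forall>b\<in>set \<beta>. v b = 1" using good v by auto
        then have "E v = 1" unfolding E_def by auto
        then show False using v unfolding A_def by simp
      qed
    qed
    then show "MK_constant A" unfolding MK_constant_def using finS0 finite_subset by blast
    have "{v \<in> places. B v \<noteq> 0} \<subseteq> S0" unfolding B_def S0_def by auto
    then show "MK_constant B" unfolding MK_constant_def using finS0 finite_subset by blast
    show "\<forall>v\<in>places. \<not> archimedean v \<longrightarrow> B v = 0" unfolding B_def by simp
    show "\<forall>v\<in>places. \<forall>t z::'k. z \<noteq> 0 \<longrightarrow>
          ln (v z) > logp (v t) / real e + A v \<longrightarrow>
          v (famf e \<beta> t z) \<ge> v z \<and>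
          \<bar>green d (famf e \<beta> t) v z - ln (v z)\<bar> \<le> B v"
    proof (intro ballI allI impI)
      fix v :: "'k \<Rightarrow> real" and t z :: 'k
      assume v: "v \<in> places" and z0: "z \<noteq> 0" and h: "ln (v z) > logp (v t) / real e + A v"
      have av: "abs_value v" using place_av[OF v] .
      have vz0: "v z > 0" using av_pos[OF av z0] .
      have hu: "v z > E v \<and> v z ^ e > E v ^ e * max 1 (v t)"
        using hyp_unpack[OF vz0 E1[OF av] e0] h unfolding A_def by blast
      have Ee: "E v \<le> E v ^ e" using E1[OF av] e0 by (metis One_nat_def Suc_leI power_increasing power_one_right)
      show "v (famf e \<beta> t z) \<ge> v z \<and> \<bar>green d (famf e \<beta> t) v z - ln (v z)\<bar> \<le> B v"
      proof (cases "archimedean v")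
        case True
        have EM: "E v = 2 ^ k + 2 * M v + 1" unfolding E_def using True by simp
        have z1: "v z > 2 ^ length \<beta>" using hu EM M0[OF av] unfolding k_def by simp
        have p2: "(0::real) \<le> 2 ^ k" by simp
        have "2 * M v \<le> E v ^ e" using EM Ee p2 by linarith
        then have "2 * M v * max 1 (v t) \<le> E v ^ e * max 1 (v t)"
          by (intro mult_right_mono) auto
        then have z2: "v z ^ e \<ge> 2 * M v * max 1 (v t)" using hu by simp
        have "v (famf e \<beta> t z) \<ge> v z"
          using arch_reg[OF av M_def d2 z1 z2] by blast
        moreover have "\<bar>green d (famf e \<beta> t) v z - ln (v z)\<bar> \<le> real (length \<beta>) * ln 2"
          using arch_green[OF av M_def d2 z1 z2] unfolding d_def .
        ultimately show ?thesis unfolding B_def k_def using True by simp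
      next
        case False
        have um: "ultra v" using nonarch_ultra[OF v False] .
        have vbE: "v b \<le> E v ^ e" if b: "b \<in> set \<beta>" for b
        proof (cases "\<exists>b\<in>set \<beta>. v b > 1")
          case True
          then have "E v = 1 + M v" unfolding E_def using False by simp
          then have "v b \<le> E v" using Mb[OF av b] by simp
          then show ?thesis using Ee by simp
        next
          case c2: False
          then have "E v = 1" unfolding E_def using False by simp
          then show ?thesis using c2 b by auto
        qed
        have small: "\<forall>b\<in>set \<beta>. v (b * t) < v z ^ e"
        proof
          fix b assume b: "b \<in> set \<beta>"
          have "v (b * t) = v b * v t" by (rule av_mult[OF av])
          also have "\<dots> \<le> E v ^ e * max 1 (v t)"
            using vbE[OF b] av_nonneg[OF av, of b] av_nonneg[OF av, of t] by (intro mult_mono) auto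
          also have "\<dots> < v z ^ e" using hu by simp
          finally show "v (b * t) < v z ^ e" .
        qed
        have z1: "v z > 1" using hu E1[OF av] by simp
        have orb: "\<forall>n. v ((famf e \<beta> t ^^ n) z) = v z ^ (d ^ n)"
          using um_orbit[OF av um z1 small] d0 unfolding d_def by simp
        have G: "green d (famf e \<beta> t) v z = ln (v z)" by (rule green_exact[OF z1 d0 orb])
        have "v (famf e \<beta> t z) = v z ^ d" using orb[rule_format, of 1] by simp
        moreover have "v z ^ 1 \<le> v z ^ d" using z1 d0 by (intro power_increasing) auto
        ultimately show ?thesis using G unfolding B_def using False by simp
      qed
    qed
  qed
  have goodplace: "ultra v \<and> (\<forall>b\<in>set \<beta>. v b = 1) \<and> abs_value v \<and> (\<exists>\<pi>. uniformizer v \<pi>)"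
    if v: "v \<in> places" "v \<notin> S0" for v
  proof -
    have g: "\<not> archimedean v" "\<forall>b\<in>set \<beta>. v b = 1" using good[OF v] by auto
    have av: "abs_value v" using place_av[OF v(1)] .
    obtain p where p: "prime p" "extends_padic p v" using nonarch_padic[OF v(1) g(1)] by blast
    show ?thesis using nonarch_ultra[OF v(1) g(1)] g av uniformizer_exists[OF nf av p] by blast
  qed
  have escape2: "v (famf e \<beta> t z) = v t ^ k \<and> v (famf e \<beta> t z) > 1 \<and>
      (\<forall>b\<in>set \<beta>. v (b * t) < v (famf e \<beta> t z) ^ e)"
    if v: "v \<in> places" "v \<notin> S0" and t1: "v t > 1" and zt: "v z ^ e < v t" for v t z
  proof -
    have gp: "ultra v" "\<forall>b\<in>set \<beta>. v b = 1" "abs_value v" using goodplace[OF v] by auto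
    note av = gp(3)
    have vbt: "v (b * t) = v t" if "b \<in> set \<beta>" for b using gp(2) that by (simp add: av_mult[OF av])
    have "\<forall>b\<in>set \<beta>. v (z ^ e - b * t) = v t"
    proof
      fix b assume b: "b \<in> set \<beta>"
      have "v (z ^ e) < v (b * t)" using zt vbt[OF b] by (simp add: av_power[OF av])
      then show "v (z ^ e - b * t) = v t" using um_strict_diff2[OF av gp(1)] vbt[OF b] by simp
    qed
    then have fz: "v (famf e \<beta> t z) = v t ^ k" using v_famf[OF av, of e \<beta> t z] prod_list_const[of \<beta>] unfolding k_def by simp
    have gt1: "v t ^ k > 1" using t1 k1 by simp
    have "v t ^ 1 < v t ^ d" using t1 d2 unfolding d_def by (intro power_strict_increasing) auto
    then have "v t < (v t ^ k) ^ e" using dk by (simp add: power_mult[symmetric] mult.commute)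
    then show ?thesis using fz gt1 vbt by simp
  qed
  have P2: "\<exists>S. finite S \<and> S \<subseteq> places \<and>
       (\<forall>v\<in>places - S. \<not> archimedean v \<longrightarrow>
          (\<forall>t::'k. t \<noteq> 0 \<longrightarrow> \<not> (int e dvd nval v t) \<longrightarrow>
             (\<forall>z::'k. green d (famf e \<beta> t) v z \<ge> logp (v t) / real d)))"
  proof (intro exI[of _ S0] conjI finS0 S0sub ballI impI allI)
    fix v :: "'k \<Rightarrow> real" and t z :: 'k
    assume vS: "v \<in> places - S0" and na: "\<not> archimedean v" and t0: "t \<noteq> 0" and nd: "\<not> int e dvd nval v t"
    have v: "v \<in> places" "v \<notin> S0" using vS by auto
    have gp: "ultra v" "\<forall>b\<in>set \<beta>. v b = 1" "abs_value v" "\<exists>\<pi>. uniformizer v \<pi>" using goodplace[OF v] by auto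
    note av = gp(3) and um = gp(1)
    have vbt: "v (b * t) = v t" if "b \<in> set \<beta>" for b using gp(2) that by (simp add: av_mult[OF av])
    show "green d (famf e \<beta> t) v z \<ge> logp (v t) / real d"
    proof (cases "v t \<le> 1")
      case True
      then have L0: "logp (v t) = 0" unfolding logp_def by (simp add: max_def)
      show ?thesis
      proof (cases "v z \<le> 1")
        case True
        have "\<forall>n. v ((famf e \<beta> t ^^ n) z) \<le> 1"
          using um_orbit_le1[OF av um _ \<open>v t \<le> 1\<close> True] gp(2) by simp
        then have "green d (famf e \<beta> t) v z = 0" by (rule green_zero)
        then show ?thesis using L0 by simp
      next
        case False
        then have z1: "v z > 1" by simp
        have "v z ^ 1 \<le> v z ^ e" using z1 e0 by (intro power_increasing) auto
        then have small: "\<forall>b\<in>set \<beta>. v (b * t) < v z ^ e" using vbt \<open>v t \<le> 1\<close> z1 by simp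
        have orb: "\<forall>n. v ((famf e \<beta> t ^^ n) z) = v z ^ (d ^ n)"
          using um_orbit[OF av um z1 small] d0 unfolding d_def by simp
        have "green d (famf e \<beta> t) v z = ln (v z)" by (rule green_exact[OF z1 d0 orb])
        then show ?thesis using L0 z1 by simp
      qed
    next
      case False
      then have t1: "v t > 1" by simp
      have L: "logp (v t) = ln (v t)" using t1 by (simp add: logp_ln)
      have lnt: "ln (v t) > 0" using t1 by simp
      consider (gt) "v z ^ e > v t" | (lt) "v z ^ e < v t" | (eq) "v z ^ e = v t" by linarith
      then show ?thesis
      proof cases
        case gt
        have z1: "v z > 1"
        proof (rule ccontr)
          assume "\<not> v z > 1"
          then have "v z ^ e \<le> 1" using av_nonneg[OF av, of z] by (simp add: power_le_one)
          then show False using gt t1 by simp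
        qed
        have small: "\<forall>b\<in>set \<beta>. v (b * t) < v z ^ e" using vbt gt by simp
        have orb: "\<forall>n. v ((famf e \<beta> t ^^ n) z) = v z ^ (d ^ n)"
          using um_orbit[OF av um z1 small] d0 unfolding d_def by simp
        have G: "green d (famf e \<beta> t) v z = ln (v z)" by (rule green_exact[OF z1 d0 orb])
        have "ln (v t) < ln (v z ^ e)" using gt t1 by simp
        then have "ln (v t) < real e * ln (v z)" using z1 by (simp add: ln_realpow)
        then have "ln (v t) / real e < ln (v z)" using e0 by (simp add: field_simps)
        moreover have "ln (v t) / real d \<le> ln (v t) / real e"
          using dge e0 lnt by (intro divide_left_mono) auto
        ultimately show ?thesis using G L by simp
      next
        case lt
        have es: "v (famf e \<beta> t z) = v t ^ k \<and> v (famf e \<beta> t z) > 1 \<and>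
            (\<forall>b\<in>set \<beta>. v (b * t) < v (famf e \<beta> t z) ^ e)" by (rule escape2[OF v t1 lt])
        define w where "w = famf e \<beta> t z"
        have w1: "v w > 1" and sw: "\<forall>b\<in>set \<beta>. v (b * t) < v w ^ e" using es unfolding w_def by auto
        have orb: "\<forall>n. v ((famf e \<beta> t ^^ n) (famf e \<beta> t z)) = v w ^ (d ^ n)"
          using um_orbit[OF av um w1 sw] d0 unfolding d_def w_def by simp
        have G: "green d (famf e \<beta> t) v z = ln (v w) / real d" by (rule green_exact_shift[OF w1 d0 orb])
        have "ln (v w) = real k * ln (v t)" using es t1 unfolding w_def by (simp add: ln_realpow)
        moreover have "real k * ln (v t) \<ge> ln (v t)" using k1 lnt by simp
        ultimately have "ln (v w) / real d \<ge> ln (v t) / real d" using d0 by (simp add: divide_right_mono)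
        then show ?thesis using G L by simp
      next
        case eq
        have "v z \<noteq> 0" using eq t1 e0 by (metis power_0_left zero_less_one not_less_iff_gr_or_eq order.strict_trans)
        then have z0: "z \<noteq> 0" using av_zero[OF av] by auto
        have "nval v t = int e * nval v z" using nval_power[OF av gp(4) z0 eq[symmetric]] .
        then have "int e dvd nval v t" by simp
        then show ?thesis using nd by simp
      qed
    qed
  qed
  have P3: "\<exists>S. finite S \<and> S \<subseteq> places \<and>
       (\<forall>t::'k. \<forall>v\<in>places - S. v t > 1 \<longrightarrow>
          (\<forall>z::'k. preperiodic (famf e \<beta> t) z \<longrightarrow> v z ^ e = v t))"
  proof (intro exI[of _ S0] conjI finS0 S0sub allI ballI impI)
    fix t z :: 'k and v :: "'k \<Rightarrow> real"
    assume vS: "v \<in> places - S0" and t1: "v t > 1" and pre: "preperiodic (famf e \<beta> t) z"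
    have v: "v \<in> places" "v \<notin> S0" using vS by auto
    have gp: "ultra v" "\<forall>b\<in>set \<beta>. v b = 1" "abs_value v" using goodplace[OF v] by auto
    note av = gp(3) and um = gp(1)
    have vbt: "v (b * t) = v t" if "b \<in> set \<beta>" for b using gp(2) that by (simp add: av_mult[OF av])
    define f where "f = famf e \<beta> t"
    have fin: "finite {(f ^^ n) z | n. True}" using pre unfolding preperiodic_def f_def .
    have d2': "d \<ge> 2" using d2 unfolding d_def .
    show "v z ^ e = v t"
    proof (rule ccontr)
      assume ne: "v z ^ e \<noteq> v t"
      then consider (gt) "v z ^ e > v t" | (lt) "v z ^ e < v t" by linarith
      then show False
      proof cases
        case gt
        have z1: "v z > 1"
        proof (rule ccontr)
          assume "\<not> v z > 1"
          then have "v z ^ e \<le> 1" using av_nonneg[OF av, of z] by (simp add: power_le_one)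
          then show False using gt t1 by simp
        qed
        have small: "\<forall>b\<in>set \<beta>. v (b * t) < v z ^ e" using vbt gt by simp
        have orb: "\<forall>n. v ((f ^^ n) z) = v z ^ (d ^ n)"
          using um_orbit[OF av um z1 small] d0 unfolding d_def f_def by simp
        have "infinite {(f ^^ n) z | n. True}" by (rule orbit_infinite[OF z1 d2' orb])
        then show False using fin by simp
      next
        case lt
        have es: "v (famf e \<beta> t z) = v t ^ k \<and> v (famf e \<beta> t z) > 1 \<and>
            (\<forall>b\<in>set \<beta>. v (b * t) < v (famf e \<beta> t z) ^ e)" by (rule escape2[OF v t1 lt])
        define w where "w = f z"
        have w1: "v w > 1" and sw: "\<forall>b\<in>set \<beta>. v (b * t) < v w ^ e" using es unfolding w_def f_def by auto
        have orb: "\<forall>n. v ((f ^^ n) w) = v w ^ (d ^ n)"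
          using um_orbit[OF av um w1 sw] d0 unfolding d_def f_def by simp
        have inf: "infinite {(f ^^ n) w | n. True}" by (rule orbit_infinite[OF w1 d2' orb])
        have "{(f ^^ n) w | n. True} \<subseteq> {(f ^^ n) z | n. True}"
        proof
          fix x assume "x \<in> {(f ^^ n) w | n. True}"
          then obtain n where x: "x = (f ^^ n) w" by blast
          have "(f ^^ n) w = (f ^^ Suc n) z" unfolding w_def by (simp add: funpow_Suc_right del: funpow.simps)
          then show "x \<in> {(f ^^ n) z | n. True}" using x by blast
        qed
        then show False using inf fin finite_subset by blast
      qed
    qed
  qed
  show ?thesis using P1 P2 P3 by blast
qed

end
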